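(* There is an absolute constant $c>0$ such that the following holds. Let $0\le \varepsilon_1<\varepsilon_2\le 1$, let $n,m$ be positive integers with $m\ge c$. Suppose there exist real random variables $U,U'$ supported on an interval $[a,b]$ with $0\le a<b$ and $b-a\le \varepsilon_2^2/1000$, such that $\mathbb{E}[U]=\mathbb{E}[U']=1/n$, \[ \mathbb{E}\Big[\Big|U-\frac1n\Big|\Big]\le \frac{\varepsilon_1}{n},\qquad \mathbb{E}\Big[\Big|U'-\frac1n\Big|\Big]\ge \frac{\varepsilon_2}{n}, \] and \[ \operatorname{TV}\big(\mathbb{E}\,\mathrm{Poi}(mU),\ \mathbb{E}\,\mathrm{Poi}(mU')\big)\le \frac{1}{20n}. \] Then any tester which, for every unknown distribution $p$ over $[n]$, distinguishes between $\|p-\mathrm{Unif}_n\|_1\le 25\varepsilon_1$ and $\|p-\mathrm{Unif}_n\|_1\ge \varepsilon_2/2$ with probability at least $4/5$ requires at least $m/2$ samples from $p$.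
   Context: $\mathbb{E}\,\mathrm{Poi}(mU)$ denotes the mixture distribution on $\{0,1,2,\dots\}$ obtained by first drawing $U$ and then drawing a Poisson variable with mean $mU$. $\operatorname{TV}$ is total variation distance. $\mathrm{Unif}_n$ is the uniform distribution on $[n]$, $\|p-q\|_1=\sum_i|p_i-q_i|$. A tester receives i.i.d. samples from $p$ and must output "close" with probability $\ge4/5$ in the first case and "far" with probability $\ge4/5$ in the second. *)

theory Defs
  imports "HOL-Probability.Probability"
begin

text \<open>The Poisson
  pmf is written out explicitly so that rate 0 (U = 0) is allowed.\<close>
definition poi_mix :: "real measure \<Rightarrow> real \<Rightarrow> nat \<Rightarrow> real" where
  "poi_mix M m j = (\<integral>x. (m * x) ^ j / fact j * exp (- (m * x)) \<partial>M)"

definition tv_nat :: "(nat \<Rightarrow> real) \<Rightarrow> (nat \<Rightarrow> real) \<Rightarrow> real" where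
  "tv_nat q q' = (1/2) * (\<Sum>j. \<bar>q j - q' j\<bar>)"

definition l1_unif :: "nat \<Rightarrow> nat pmf \<Rightarrow> real" where
  "l1_unif n p = (\<Sum>i\<in>{1..n}. \<bar>pmf p i - 1 / real n\<bar>)"

definition tester_ok :: "nat \<Rightarrow> nat \<Rightarrow> (nat list \<Rightarrow> bool pmf) \<Rightarrow> real \<Rightarrow> real \<Rightarrow> bool" where
  "tester_ok n k T d1 d2 \<longleftrightarrow>
     (\<forall>p :: nat pmf. set_pmf p \<subseteq> {1..n} \<longrightarrow>
        (l1_unif n p \<le> d1 \<longrightarrow> measure_pmf.prob (bind_pmf (replicate_pmf k p) T) {True} \<ge> 4/5) \<and>
        (l1_unif n p \<ge> d2 \<longrightarrow> measure_pmf.prob (bind_pmf (replicate_pmf k p) T) {False} \<ge> 4/5))"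

end

theory Submission
  imports Defs "HOL-Probability.Probability" "HOL-Combinatorics.Multiset_Permutations"
begin


definition poi :: "real \<Rightarrow> nat pmf" where
  "poi r = embed_pmf (\<lambda>j. exp (- max 0 r) * max 0 r ^ j / fact j)"

lemma exp_sums_real: "(\<lambda>n. (x::real) ^ n / fact n) sums exp x"
  using exp_converges[of x] by (simp add: real_scaleR_def field_simps)

lemma poi_sums: fixes r :: real shows "(\<lambda>j. exp (- max 0 r) * max 0 r ^ j / fact j) sums 1"
proof -
  have "(\<lambda>j. exp (- max 0 r) * (max 0 r ^ j / fact j)) sums (exp (- max 0 r) * exp (max 0 r))"
    using sums_mult[OF exp_sums_real[of "max 0 r"], of "exp (- max 0 r)"] by simp
  then show ?thesis by (simp add: exp_minus field_simps)
qed

lemma pmf_poi: "pmf (poi r) j = exp (- max 0 r) * max 0 r ^ j / fact j"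
  unfolding poi_def
proof (rule pmf_embed_pmf)
  show "\<integral>\<^sup>+ x. ennreal (exp (- max 0 r) * max 0 r ^ x / fact x) \<partial>count_space UNIV = 1"
    using poi_sums[of r] 
    by (simp add: nn_integral_count_space_nat suminf_ennreal2 sums_summable sums_unique[symmetric])
qed auto

lemma poi_tail:
  assumes r: "r \<ge> 0"
  shows "measure_pmf.prob (poi r) {..<k} \<le> (3/2) ^ k * exp (- r / 3)"
proof -
  have "measure_pmf.prob (poi r) {..<k} = (\<Sum>j<k. pmf (poi r) j)"
    by (simp add: measure_measure_pmf_finite)
  also have "\<dots> \<le> (\<Sum>j<k. exp (- r) * r ^ j / fact j * (3/2) ^ (k - j))"
  proof (intro sum_mono)
    fix j assume "j \<in> {..<k}"
    have "exp (- r) * r ^ j / fact j * 1 \<le> exp (- r) * r ^ j / fact j * (3/2) ^ (k - j)"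
      using r by (intro mult_left_mono one_le_power) auto
    then show "pmf (poi r) j \<le> exp (- r) * r ^ j / fact j * (3/2) ^ (k - j)"
      using r by (simp add: pmf_poi)
  qed
  also have "\<dots> = (3/2) ^ k * exp (- r) * (\<Sum>j<k. (2*r/3) ^ j / fact j)"
  proof -
    have "exp (- r) * r ^ j / fact j * (3/2) ^ (k - j) = (3/2) ^ k * exp (- r) * ((2*r/3) ^ j / fact j)"
      if "j < k" for j
    proof -
      have "(3/2::real) ^ k = (3/2) ^ (k - j) * (3/2) ^ j" using that
        by (simp flip: power_add)
      then show ?thesis by (simp add: power_mult_distrib power_divide field_simps)
    qed
    then show ?thesis by (simp add: sum_distrib_left del: times_divide_eq_left times_divide_eq_right)
  qed
  also have "(\<Sum>j<k. (2*r/3) ^ j / fact j) \<le> exp (2*r/3)"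
    using exp_sums_real[of "2*r/3"] r
    by (intro sum_le_suminf[where f="\<lambda>j. (2*r/3) ^ j / fact j", unfolded sums_unique[OF exp_sums_real, symmetric]])
       (auto simp: sums_summable)
  then have "(3/2) ^ k * exp (- r) * (\<Sum>j<k. (2*r/3) ^ j / fact j) \<le> (3/2) ^ k * exp (- r) * exp (2*r/3)"
    by (intro mult_left_mono) auto
  also have "(3/2) ^ k * exp (- r) * exp (2*r/3) = (3/2) ^ k * exp (- r / 3)"
    by (simp flip: exp_add)
  finally show ?thesis by simp
qed

lemma pmf_replicate:
  "pmf (replicate_pmf N p) xs = (if length xs = N then prod_list (map (pmf p) xs) else 0)"
proof (induction N arbitrary: xs)
  case 0
  then show ?case by (auto simp: pmf_return indicator_def)
next
  case (Suc N)
  have eq: "replicate_pmf (Suc N) p = map_pmf (\<lambda>(x,ys). x#ys) (pair_pmf p (replicate_pmf N p))"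
    by (simp add: map_pmf_def pair_pmf_def bind_assoc_pmf bind_return_pmf)
  show ?case
  proof (cases xs)
    case Nil
    have "(\<lambda>(x,y). x#y) -` {[]} = ({} :: ('a \<times> 'a list) set)" by auto
    then show ?thesis unfolding eq using Nil by (auto simp: pmf_map)
  next
    case (Cons y ys)
    have "pmf (map_pmf (\<lambda>(x,ys). x#ys) (pair_pmf p (replicate_pmf N p))) (y#ys) =
          pmf (pair_pmf p (replicate_pmf N p)) (y, ys)"
      using pmf_map_inj'[of "\<lambda>(x,ys). x#ys" "pair_pmf p (replicate_pmf N p)" "(y,ys)"]
      by (auto simp: inj_def)
    then show ?thesis unfolding eq using Cons Suc.IH by (simp add: pmf_pair)
  qed
qed

lemma pmf_replicate_mset:
  assumes "mset xs = mset ys"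
  shows "pmf (replicate_pmf N p) xs = pmf (replicate_pmf N p) ys"
proof -
  have "length xs = length ys" using assms by (metis size_mset)
  moreover have "prod_list (map (pmf p) xs) = prod_list (map (pmf p) ys)"
    using assms by (metis mset_map prod_mset_prod_list)
  ultimately show ?thesis by (simp add: pmf_replicate)
qed

lemma rep_perm:
  "bind_pmf (replicate_pmf N p) (\<lambda>xs. pmf_of_set (permutations_of_multiset (mset xs))) = replicate_pmf N p"
proof (rule pmf_eqI)
  fix zs :: "'a list"
  let ?P = "permutations_of_multiset (mset zs)"
  have cP: "card ?P > 0" by (simp add: card_gt_0_iff)
  have "pmf (bind_pmf (replicate_pmf N p) (\<lambda>xs. pmf_of_set (permutations_of_multiset (mset xs)))) zs
      = (\<integral>xs. (indicator ?P xs :: real) / real (card ?P) \<partial>measure_pmf (replicate_pmf N p))"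
    unfolding pmf_bind
  proof (intro Bochner_Integration.integral_cong refl)
    fix xs :: "'a list"
    have mem: "ys \<in> permutations_of_multiset A \<longleftrightarrow> mset ys = A" for ys A
      by (simp add: permutations_of_multiset_def)
    show "pmf (pmf_of_set (permutations_of_multiset (mset xs))) zs = indicator ?P xs / real (card ?P)"
      by (cases "mset xs = mset zs") (auto simp: pmf_of_set indicator_def mem)
  qed
  also have "\<dots> = measure_pmf.prob (replicate_pmf N p) ?P / card ?P"
    by simp
  also have "measure_pmf.prob (replicate_pmf N p) ?P = (\<Sum>xs\<in>?P. pmf (replicate_pmf N p) xs)"
    by (simp add: measure_measure_pmf_finite)
  also have "\<dots> = (\<Sum>xs\<in>?P. pmf (replicate_pmf N p) zs)"
    by (intro sum.cong refl pmf_replicate_mset) (auto simp: permutations_of_multiset_def)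
  finally show "pmf (bind_pmf (replicate_pmf N p) (\<lambda>xs. pmf_of_set (permutations_of_multiset (mset xs)))) zs
      = pmf (replicate_pmf N p) zs" using cP by simp
qed

lemma take_rep:
  assumes "k \<le> N"
  shows "map_pmf (take k) (replicate_pmf N p) = replicate_pmf k p"
proof -
  obtain r where N: "N = k + r" using assms le_Suc_ex by blast
  have "map_pmf (take k) (replicate_pmf (k + r) p) =
     replicate_pmf k p \<bind> (\<lambda>x. replicate_pmf r p \<bind> (\<lambda>_. return_pmf x))"
    unfolding replicate_pmf_distrib
    by (auto simp: map_bind_pmf map_return_pmf set_replicate_pmf intro!: bind_pmf_cong)
  then show ?thesis unfolding N by (simp add: bind_pmf_const bind_return_pmf')
qed




definition cmset :: "nat set \<Rightarrow> (nat \<Rightarrow> nat) \<Rightarrow> nat multiset" where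
  "cmset I c = (\<Sum>i\<in>I. replicate_mset (c i) i)"

lemma count_cmset: "finite I \<Longrightarrow> count (cmset I c) j = (if j \<in> I then c j else 0)"
  unfolding cmset_def by (induction I rule: finite_induct) auto

lemma prod_mset_cmset:
  "finite I \<Longrightarrow> prod_mset (image_mset f (cmset I c)) = (\<Prod>i\<in>I. f i ^ c i)"
  unfolding cmset_def by (induction I rule: finite_induct) auto

lemma size_cmset: "finite I \<Longrightarrow> size (cmset I c) = (\<Sum>i\<in>I. c i)"
  unfolding cmset_def by (induction I rule: finite_induct) auto

lemma set_mset_cmset: "finite I \<Longrightarrow> set_mset (cmset I c) = {i\<in>I. c i > 0}"
  using count_cmset[of I c] by (auto simp: set_mset_def)

lemma sum_count_list:
  assumes "finite I" "set xs \<subseteq> I"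
  shows "(\<Sum>i\<in>I. count (mset xs) i) = length xs"
  using assms(2)
proof (induction xs)
  case Nil then show ?case by simp
next
  case (Cons x xs)
  then have "(\<Sum>i\<in>I. count (mset (x # xs)) i) = (\<Sum>i\<in>I. count (mset xs) i + (if i = x then 1 else 0))"
    by (intro sum.cong) auto
  also have "\<dots> = (\<Sum>i\<in>I. count (mset xs) i) + 1"
    using Cons.prems assms(1) by (simp add: sum.distrib)
  finally show ?case using Cons by simp
qed

lemma cmset_count_list:
  assumes "finite I" "set xs \<subseteq> I"
  shows "cmset I (\<lambda>i. count (mset xs) i) = mset xs"
  using assms by (intro multiset_eqI) (auto simp: count_cmset count_eq_zero_iff)

lemma poisson_split:
  fixes r :: "nat \<Rightarrow> real"
  assumes fin: "finite I" and S: "S = (\<Sum>i\<in>I. max 0 (r i))" "S > 0"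
  and p: "\<And>i. pmf p i = (if i \<in> I then max 0 (r i) / S else 0)"
  shows "Pi_pmf I 0 (\<lambda>i. poi (r i)) =
           bind_pmf (poi S) (\<lambda>N. map_pmf (\<lambda>xs i. count (mset xs) i) (replicate_pmf N p))"
proof (rule pmf_eqI)
  fix c :: "nat \<Rightarrow> nat"
  define cnt where "cnt = (\<lambda>xs::nat list. \<lambda>i. count (mset xs) i)"
  have setp: "set_pmf p \<subseteq> I" using p by (auto simp: set_pmf_iff split: if_splits)
  show "pmf (Pi_pmf I 0 (\<lambda>i. poi (r i))) c = pmf (bind_pmf (poi S) (\<lambda>N. map_pmf cnt (replicate_pmf N p))) c"
  proof (cases "\<forall>x. x \<notin> I \<longrightarrow> c x = 0")
    case False
    have "pmf (map_pmf cnt (replicate_pmf N p)) c = 0" for N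
    proof (rule pmf_eq_0_set_pmf[THEN iffD2], rule notI)
      assume "c \<in> set_pmf (map_pmf cnt (replicate_pmf N p))"
      then obtain xs where xs: "xs \<in> set_pmf (replicate_pmf N p)" "c = cnt xs" by auto
      then have "set xs \<subseteq> I" using setp by (auto simp: set_replicate_pmf)
      then show False using False xs(2) by (auto simp: cnt_def count_eq_zero_iff)
    qed
    moreover have "pmf (Pi_pmf I 0 (\<lambda>i. poi (r i))) c = 0"
      by (simp only: pmf_Pi[OF fin] if_not_P[OF False])
    ultimately show ?thesis by (simp add: pmf_bind)
  next
    case True
    define A where "A = cmset I c"
    define N0 where "N0 = (\<Sum>i\<in>I. c i)"
    define K where "K = (\<Prod>i\<in>I. pmf p i ^ c i)"
    have cA: "count A = c" using True fin by (auto simp: A_def count_cmset fun_eq_iff)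
    have sizeA: "size A = N0" using fin by (simp add: A_def N0_def size_cmset)
    have pre: "cnt -` {c} = permutations_of_multiset A"
    proof -
      have "cnt xs = c \<longleftrightarrow> mset xs = A" for xs
        using cA by (auto simp: cnt_def multiset_eq_iff fun_eq_iff)
      then show ?thesis by (auto simp: permutations_of_multiset_def)
    qed
    have inner: "pmf (map_pmf cnt (replicate_pmf N p)) c = (if N = N0 then real (card (permutations_of_multiset A)) * K else 0)" for N
    proof -
      have "pmf (map_pmf cnt (replicate_pmf N p)) c = measure_pmf.prob (replicate_pmf N p) (permutations_of_multiset A)"
        by (simp add: pmf_map pre)
      also have "\<dots> = (\<Sum>xs\<in>permutations_of_multiset A. pmf (replicate_pmf N p) xs)"
        by (simp add: measure_measure_pmf_finite)
      also have "\<dots> = (\<Sum>xs\<in>permutations_of_multiset A. if N = N0 then K else 0)"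
      proof (intro sum.cong refl)
        fix xs assume "xs \<in> permutations_of_multiset A"
        then have m: "mset xs = A" by (simp add: permutations_of_multiset_def)
        then have "length xs = N0" using sizeA by (metis size_mset)
        moreover have "prod_list (map (pmf p) xs) = K"
          using m fin by (metis A_def K_def mset_map prod_mset_prod_list prod_mset_cmset)
        ultimately show "pmf (replicate_pmf N p) xs = (if N = N0 then K else 0)"
          by (auto simp: pmf_replicate)
      qed
      finally show ?thesis by simp
    qed
    have "pmf (bind_pmf (poi S) (\<lambda>N. map_pmf cnt (replicate_pmf N p))) c =
          (\<integral>N. (if N = N0 then real (card (permutations_of_multiset A)) * K else 0) \<partial>measure_pmf (poi S))"
      by (simp add: pmf_bind inner)
    also have "\<dots> = pmf (poi S) N0 * real (card (permutations_of_multiset A)) * K"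
      by (subst integral_measure_pmf_real[where A="{N0}"]) (auto split: if_splits)
    also have "\<dots> = pmf (Pi_pmf I 0 (\<lambda>i. poi (r i))) c"
    proof -
      have fpos: "(\<Prod>i\<in>I. fact (c i) :: real) > 0" by (intro prod_pos) auto
      have "card (permutations_of_multiset A) * (\<Prod>x\<in>set_mset A. fact (count A x)) = fact (size A)"
        by (rule card_permutations_of_multiset_aux)
      moreover have "(\<Prod>x\<in>set_mset A. fact (count A x)) = (\<Prod>i\<in>I. fact (c i) :: nat)"
        unfolding cA using fin by (intro prod.mono_neutral_left) (auto simp: A_def set_mset_cmset)
      ultimately have ne: "card (permutations_of_multiset A) * (\<Prod>i\<in>I. fact (c i)) = fact N0"
        using sizeA by simp
      have "real (card (permutations_of_multiset A) * (\<Prod>i\<in>I. fact (c i))) = real (fact N0)"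
        by (simp only: ne)
      then have "real (card (permutations_of_multiset A)) * (\<Prod>i\<in>I. fact (c i)) = fact N0"
        by (simp only: of_nat_mult of_nat_prod of_nat_fact)
      then have card: "real (card (permutations_of_multiset A)) = fact N0 / (\<Prod>i\<in>I. fact (c i))"
        using fpos by (simp add: eq_divide_eq)
      have K: "K = (\<Prod>i\<in>I. max 0 (r i) ^ c i) / S ^ N0"
        unfolding K_def N0_def using fin
        by (simp add: p power_divide prod_dividef power_sum)
      have e: "exp (- S) = (\<Prod>i\<in>I. exp (- max 0 (r i)))"
        unfolding S(1) using fin by (simp add: exp_sum sum_negf[symmetric])
      have "pmf (poi S) N0 * real (card (permutations_of_multiset A)) * K =
            exp (- S) * S ^ N0 / fact N0 * (fact N0 / (\<Prod>i\<in>I. fact (c i))) *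
              ((\<Prod>i\<in>I. max 0 (r i) ^ c i) / S ^ N0)"
        using S(2) by (simp add: pmf_poi card K)
      also have "\<dots> = exp (- S) * (\<Prod>i\<in>I. max 0 (r i) ^ c i) / (\<Prod>i\<in>I. fact (c i))"
      proof -
        have "S ^ N0 \<noteq> 0" "(fact N0::real) \<noteq> 0" using S(2) by auto
        then show ?thesis using S(2) by (simp add: divide_simps)
      qed
      also have "\<dots> = (\<Prod>i\<in>I. exp (- max 0 (r i)) * max 0 (r i) ^ c i / fact (c i))"
        unfolding e by (simp add: prod.distrib prod_dividef)
      also have "\<dots> = pmf (Pi_pmf I 0 (\<lambda>i. poi (r i))) c"
        using True fin by (simp add: pmf_Pi pmf_poi)
      finally show ?thesis .
    qed
    finally show ?thesis by simp
  qed
qed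

lemma fixed_formula:
  fixes r :: "nat \<Rightarrow> real" and T :: "nat list \<Rightarrow> bool pmf"
  assumes fin: "finite I" and S: "S = (\<Sum>i\<in>I. max 0 (r i))" "S > 0"
  and p: "\<And>i. pmf p i = (if i \<in> I then max 0 (r i) / S else 0)"
  and D: "D = (\<lambda>c. if k \<le> (\<Sum>i\<in>I. c i) then bind_pmf (pmf_of_set (permutations_of_multiset (cmset I c)))
                       (\<lambda>ys. T (take k ys)) else return_pmf False)"
  shows "pmf (bind_pmf (Pi_pmf I 0 (\<lambda>i. poi (r i))) D) True =
         pmf (bind_pmf (replicate_pmf k p) T) True * measure_pmf.prob (poi S) {k..}"
proof -
  define B where "B = bind_pmf (replicate_pmf k p) T"
  have setp: "set_pmf p \<subseteq> I" using p by (auto simp: set_pmf_iff split: if_splits)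
  have inner: "bind_pmf (replicate_pmf N p) (\<lambda>xs. D (\<lambda>i. count (mset xs) i)) =
               (if k \<le> N then B else return_pmf False)" for N
  proof -
    have "bind_pmf (replicate_pmf N p) (\<lambda>xs. D (\<lambda>i. count (mset xs) i)) =
          bind_pmf (replicate_pmf N p) (\<lambda>xs. if k \<le> N then
             bind_pmf (pmf_of_set (permutations_of_multiset (mset xs))) (\<lambda>ys. T (take k ys))
             else return_pmf False)"
    proof (intro bind_pmf_cong refl)
      fix xs assume "xs \<in> set_pmf (replicate_pmf N p)"
      then have "set xs \<subseteq> I" "length xs = N" using setp by (auto simp: set_replicate_pmf)
      then show "D (\<lambda>i. count (mset xs) i) = (if k \<le> N then
             bind_pmf (pmf_of_set (permutations_of_multiset (mset xs))) (\<lambda>ys. T (take k ys))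
             else return_pmf False)"
        using fin by (simp add: D sum_count_list cmset_count_list)
    qed
    also have "\<dots> = (if k \<le> N then B else return_pmf False)"
    proof (cases "k \<le> N")
      case True
      have "bind_pmf (replicate_pmf N p) (\<lambda>xs.
             bind_pmf (pmf_of_set (permutations_of_multiset (mset xs))) (\<lambda>ys. T (take k ys))) =
            bind_pmf (bind_pmf (replicate_pmf N p) (\<lambda>xs. pmf_of_set (permutations_of_multiset (mset xs))))
              (\<lambda>ys. T (take k ys))"
        by (simp add: bind_assoc_pmf)
      also have "\<dots> = bind_pmf (map_pmf (take k) (replicate_pmf N p)) T"
        by (simp add: rep_perm bind_map_pmf o_def)
      also have "\<dots> = B" using True by (simp add: take_rep B_def)
      finally show ?thesis using True by simp
    qed (simp add: bind_pmf_const)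
    finally show ?thesis .
  qed
  have "bind_pmf (Pi_pmf I 0 (\<lambda>i. poi (r i))) D = bind_pmf (poi S) (\<lambda>N. if k \<le> N then B else return_pmf False)"
    unfolding poisson_split[OF fin S p]
    by (simp add: bind_assoc_pmf bind_map_pmf o_def inner)
  then have "pmf (bind_pmf (Pi_pmf I 0 (\<lambda>i. poi (r i))) D) True =
     (\<integral>N. pmf B True * indicator {k..} N \<partial>measure_pmf (poi S))"
    by (simp only: pmf_bind) (intro Bochner_Integration.integral_cong refl, auto simp: indicator_def pmf_return)
  also have "\<dots> = pmf B True * measure_pmf.prob (poi S) {k..}"
    by (simp only: integral_mult_right_zero integral_indicator) simp
  finally show ?thesis by (simp add: B_def)
qed




definition closeP :: "'a pmf \<Rightarrow> 'a pmf \<Rightarrow> real \<Rightarrow> bool" where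
  "closeP P Q d \<longleftrightarrow> (\<forall>f::'a \<Rightarrow> ennreal. (\<forall>x. f x \<le> 1) \<longrightarrow>
       (\<integral>\<^sup>+x. f x \<partial>measure_pmf P) \<le> (\<integral>\<^sup>+x. f x \<partial>measure_pmf Q) + ennreal d)"

lemma closeP_refl: "closeP P P d"
  unfolding closeP_def by (auto intro: add_increasing2)

lemma closeP_mono: "closeP P Q a \<Longrightarrow> a \<le> b \<Longrightarrow> closeP P Q b"
  unfolding closeP_def by (meson add_left_mono ennreal_leI order_trans)

lemma nn_integral_le_1_pmf: "(\<And>x. f x \<le> 1) \<Longrightarrow> (\<integral>\<^sup>+x. f x \<partial>measure_pmf P) \<le> 1"
proof -
  assume "\<And>x. f x \<le> 1"
  then have "(\<integral>\<^sup>+x. f x \<partial>measure_pmf P) \<le> (\<integral>\<^sup>+x. 1 \<partial>measure_pmf P)"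
    by (intro nn_integral_mono) auto
  then show ?thesis by simp
qed

lemma closeP_bind:
  assumes PQ: "closeP P Q a" and K: "\<And>x. closeP (K x) (K' x) b" and ab: "a \<ge> 0" "b \<ge> 0"
  shows "closeP (bind_pmf P K) (bind_pmf Q K') (a + b)"
  unfolding closeP_def
proof (intro allI impI)
  fix f :: "'b \<Rightarrow> ennreal" assume f: "\<forall>x. f x \<le> 1"
  have "(\<integral>\<^sup>+x. f x \<partial>measure_pmf (bind_pmf P K)) = (\<integral>\<^sup>+x. \<integral>\<^sup>+y. f y \<partial>K x \<partial>P)" by simp
  also have "\<dots> \<le> (\<integral>\<^sup>+x. ((\<integral>\<^sup>+y. f y \<partial>K' x) + ennreal b) \<partial>P)"
    using K f unfolding closeP_def by (intro nn_integral_mono) auto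
  also have "\<dots> = (\<integral>\<^sup>+x. (\<integral>\<^sup>+y. f y \<partial>K' x) \<partial>P) + ennreal b"
    by (subst nn_integral_add) (auto simp: measure_pmf.emeasure_space_1)
  also have "(\<integral>\<^sup>+x. (\<integral>\<^sup>+y. f y \<partial>K' x) \<partial>P) \<le> (\<integral>\<^sup>+x. (\<integral>\<^sup>+y. f y \<partial>K' x) \<partial>Q) + ennreal a"
  proof -
    have g1: "\<forall>x. (\<integral>\<^sup>+y. f y \<partial>K' x) \<le> 1" using f by (auto intro!: nn_integral_le_1_pmf)
    show ?thesis by (rule PQ[unfolded closeP_def, rule_format]) (use g1 in auto)
  qed
  also have "(\<integral>\<^sup>+x. (\<integral>\<^sup>+y. f y \<partial>K' x) \<partial>Q) = (\<integral>\<^sup>+x. f x \<partial>measure_pmf (bind_pmf Q K'))" by simp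
  finally show "(\<integral>\<^sup>+x. f x \<partial>measure_pmf (bind_pmf P K)) \<le> (\<integral>\<^sup>+x. f x \<partial>measure_pmf (bind_pmf Q K')) + ennreal (a + b)"
    using ab by (simp add: ennreal_plus add.assoc add_right_mono)
qed

lemma closeP_Pi:
  fixes d :: real
  assumes "finite A" "\<And>i. i \<in> A \<Longrightarrow> closeP (q i) (q' i) d" "d \<ge> 0"
  shows "closeP (Pi_pmf A dflt q) (Pi_pmf A dflt q') (real (card A) * d)"
  using assms
proof (induction A rule: finite_induct)
  case empty
  then show ?case by (simp add: closeP_refl)
next
  case (insert x A)
  have IH: "closeP (Pi_pmf A dflt q) (Pi_pmf A dflt q') (real (card A) * d)"
    using insert by auto
  have inner: "closeP (bind_pmf (Pi_pmf A dflt q) (\<lambda>f. return_pmf (f(x:=y))))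
                  (bind_pmf (Pi_pmf A dflt q') (\<lambda>f. return_pmf (f(x:=y)))) (real (card A) * d + 0)" for y
    using insert by (intro closeP_bind IH) (auto simp: closeP_refl)
  have "closeP (bind_pmf (q x) (\<lambda>y. bind_pmf (Pi_pmf A dflt q) (\<lambda>f. return_pmf (f(x:=y)))))
               (bind_pmf (q' x) (\<lambda>y. bind_pmf (Pi_pmf A dflt q') (\<lambda>f. return_pmf (f(x:=y)))))
               (d + (real (card A) * d + 0))"
    by (rule closeP_bind) (use insert inner in auto)
  then show ?case using insert
    by (simp add: Pi_pmf_insert' algebra_simps)
qed

lemma summable_pmf_nat: "summable (\<lambda>j. pmf (q::nat pmf) j)"
proof -
  have "(\<integral>\<^sup>+ j. ennreal (pmf q j) \<partial>count_space UNIV) = 1"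
    by (simp add: nn_integral_pmf measure_pmf.emeasure_space_1[simplified])
  then have "(\<Sum>j. ennreal (pmf q j)) \<noteq> \<top>" by (simp add: nn_integral_count_space_nat)
  then show ?thesis by (intro summable_suminf_not_top) auto
qed

lemma closeP_nat:
  fixes q q' :: "nat pmf"
  shows "closeP q q' (\<Sum>j. \<bar>pmf q j - pmf q' j\<bar>)"
  unfolding closeP_def
proof (intro allI impI)
  fix f :: "nat \<Rightarrow> ennreal" assume f: "\<forall>x. f x \<le> 1"
  have sm: "summable (\<lambda>j. \<bar>pmf q j - pmf q' j\<bar>)"
    by (rule summable_comparison_test[OF _ summable_add[OF summable_pmf_nat[of q] summable_pmf_nat[of q']]])
       (auto intro!: exI[of _ 0] simp: abs_le_iff pmf_nonneg add_increasing add_increasing2)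
  have pw: "ennreal (pmf q j) * f j \<le> ennreal (pmf q' j) * f j + ennreal \<bar>pmf q j - pmf q' j\<bar>" for j
  proof -
    have "ennreal (pmf q j) \<le> ennreal (pmf q' j) + ennreal \<bar>pmf q j - pmf q' j\<bar>"
      by (simp add: ennreal_plus[symmetric] del: ennreal_plus)
    then have "ennreal (pmf q j) * f j \<le> (ennreal (pmf q' j) + ennreal \<bar>pmf q j - pmf q' j\<bar>) * f j"
      by (intro mult_right_mono) auto
    also have "\<dots> = ennreal (pmf q' j) * f j + ennreal \<bar>pmf q j - pmf q' j\<bar> * f j"
      by (simp add: distrib_right)
    also have "ennreal \<bar>pmf q j - pmf q' j\<bar> * f j \<le> ennreal \<bar>pmf q j - pmf q' j\<bar> * 1"
      using f by (intro mult_left_mono) auto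
    finally show ?thesis by (simp add: add_left_mono)
  qed
  have "(\<integral>\<^sup>+x. f x \<partial>measure_pmf q) = (\<integral>\<^sup>+j. ennreal (pmf q j) * f j \<partial>count_space UNIV)"
    by (simp add: nn_integral_measure_pmf)
  also have "\<dots> \<le> (\<integral>\<^sup>+j. (ennreal (pmf q' j) * f j + ennreal \<bar>pmf q j - pmf q' j\<bar>) \<partial>count_space UNIV)"
    by (intro nn_integral_mono pw)
  also have "\<dots> = (\<integral>\<^sup>+j. ennreal (pmf q' j) * f j \<partial>count_space UNIV) +
                  (\<integral>\<^sup>+j. ennreal \<bar>pmf q j - pmf q' j\<bar> \<partial>count_space UNIV)"
    by (rule nn_integral_add) auto
  also have "(\<integral>\<^sup>+j. ennreal \<bar>pmf q j - pmf q' j\<bar> \<partial>count_space UNIV) = ennreal (\<Sum>j. \<bar>pmf q j - pmf q' j\<bar>)"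
    using sm by (simp add: nn_integral_count_space_nat suminf_ennreal2)
  also have "(\<integral>\<^sup>+j. ennreal (pmf q' j) * f j \<partial>count_space UNIV) = (\<integral>\<^sup>+x. f x \<partial>measure_pmf q')"
    by (simp add: nn_integral_measure_pmf)
  finally show "(\<integral>\<^sup>+x. f x \<partial>measure_pmf q) \<le> (\<integral>\<^sup>+x. f x \<partial>measure_pmf q') + ennreal (\<Sum>j. \<bar>pmf q j - pmf q' j\<bar>)" .
qed




locale mixsetup =
  fixes M :: "real measure" and a b mm :: real and I :: "nat set"
  assumes Mprob: "prob_space M" and Msets: "sets M = sets borel" and AEab: "AE x in M. x \<in> {a..b}"
    and a0: "0 \<le> a" and ab: "a \<le> b" and mm0: "0 \<le> mm" and finI: "finite I"
begin

definition cl :: "real \<Rightarrow> real" where "cl x = max a (min b x)"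
definition qM :: "nat pmf" where "qM = embed_pmf (poi_mix M mm)"
definition Pu :: "(nat \<Rightarrow> real) \<Rightarrow> (nat \<Rightarrow> nat) pmf" where
  "Pu u = Pi_pmf I 0 (\<lambda>i. poi (mm * cl (u i)))"

lemma cl_ge: "a \<le> cl x" and cl_le: "cl x \<le> b"
  using ab by (auto simp: cl_def)

lemma cl_nonneg: "0 \<le> cl x" using cl_ge a0 by (rule order_trans[rotated])

lemma AE_cl: "AE x in M. cl x = x"
  using AEab by eventually_elim (auto simp: cl_def)

lemma cl_meas[measurable]: "cl \<in> borel_measurable borel"
  unfolding cl_def by measurable

lemma bm:
  fixes f :: "real \<Rightarrow> 'b::topological_space"
  assumes "f \<in> borel_measurable borel" shows "f \<in> borel_measurable M"
  using assms by (simp add: measurable_cong_sets[OF Msets refl])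

lemma PS: "product_prob_space (\<lambda>_. M)"
  unfolding product_prob_space_def product_prob_space_axioms_def product_sigma_finite_def
  using Mprob by (auto intro: prob_space_imp_sigma_finite)

sublocale PS: product_prob_space "\<lambda>_. M" I by (rule PS)

abbreviation P where "P \<equiv> PiM I (\<lambda>_. M)"

lemma comp_meas:
  fixes g :: "real \<Rightarrow> 'b::topological_space"
  assumes "g \<in> borel_measurable borel" "i \<in> I" shows "(\<lambda>u. g (u i)) \<in> borel_measurable P"
  by (rule measurable_compose[OF measurable_component_singleton[OF assms(2)] bm[OF assms(1)]])

lemma integral_comp:
  fixes g :: "real \<Rightarrow> real"
  assumes "i \<in> I" "g \<in> borel_measurable borel"
  shows "(\<integral>u. g (u i) \<partial>P) = (\<integral>x. g x \<partial>M)"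
proof -
  have "(\<integral>x. g x \<partial>M) = (\<integral>x. g x \<partial>distr P M (\<lambda>\<omega>. \<omega> i))"
    using PS.PiM_component[OF assms(1)] by simp
  also have "\<dots> = (\<integral>u. g (u i) \<partial>P)"
    by (rule integral_distr[OF measurable_component_singleton[OF assms(1)] bm[OF assms(2)]])
  finally show ?thesis by simp
qed

lemma integrable_P_bounded:
  fixes f :: "(nat \<Rightarrow> real) \<Rightarrow> real"
  shows "f \<in> borel_measurable P \<Longrightarrow> (\<And>u. \<bar>f u\<bar> \<le> B) \<Longrightarrow> integrable P f"
  by (intro PS.P.integrable_const_bound[where B=B]) auto

lemma integrable_M_bounded:
  fixes f :: "real \<Rightarrow> real"
  shows "f \<in> borel_measurable borel \<Longrightarrow> (\<And>u. \<bar>f u\<bar> \<le> B) \<Longrightarrow> integrable M f"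
  by (intro PS.M.integrable_const_bound[where B=B] bm) auto

lemma pmf_poi_meas[measurable]: "(\<lambda>x. pmf (poi (mm * cl x)) j) \<in> borel_measurable borel"
  unfolding pmf_poi by measurable

lemma poi_mix_cl: "poi_mix M mm j = (\<integral>x. pmf (poi (mm * cl x)) j \<partial>M)"
  unfolding poi_mix_def
proof (rule integral_cong_AE)
  show "(\<lambda>x. (mm * x) ^ j / fact j * exp (- (mm * x))) \<in> borel_measurable M"
    by (intro bm) measurable
  show "(\<lambda>x. pmf (poi (mm * cl x)) j) \<in> borel_measurable M"
    by (intro bm) measurable
  show "AE x in M. (mm * x) ^ j / fact j * exp (- (mm * x)) = pmf (poi (mm * cl x)) j"
    using AE_cl
  proof eventually_elim
    case (elim x)
    then have "max 0 (mm * cl x) = mm * x" using cl_nonneg[of x] mm0 by simp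
    then show ?case using elim by (simp add: pmf_poi)
  qed
qed

lemma ennreal_poi_mix: "ennreal (poi_mix M mm j) = (\<integral>\<^sup>+x. ennreal (pmf (poi (mm * cl x)) j) \<partial>M)"
proof -
  have "(\<integral>\<^sup>+x. ennreal (pmf (poi (mm * cl x)) j) \<partial>M) = ennreal (\<integral>x. pmf (poi (mm * cl x)) j \<partial>M)"
    by (rule nn_integral_eq_integral)
       (auto intro!: integrable_M_bounded[where B=1] simp: pmf_le_1)
  then show ?thesis by (simp add: poi_mix_cl)
qed

lemma poi_mix_nonneg: "0 \<le> poi_mix M mm j"
  unfolding poi_mix_cl by (intro Bochner_Integration.integral_nonneg) auto

lemma pmf_qM: "pmf qM j = poi_mix M mm j"
  unfolding qM_def
proof (rule pmf_embed_pmf)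
  show "\<integral>\<^sup>+ x. ennreal (poi_mix M mm x) \<partial>count_space UNIV = 1"
  proof -
    have "(\<integral>\<^sup>+ j. ennreal (poi_mix M mm j) \<partial>count_space UNIV) =
          (\<integral>\<^sup>+ j. \<integral>\<^sup>+x. ennreal (pmf (poi (mm * cl x)) j) \<partial>M \<partial>count_space UNIV)"
      by (simp add: ennreal_poi_mix)
    also have "\<dots> = (\<integral>\<^sup>+x. \<integral>\<^sup>+ j. ennreal (pmf (poi (mm * cl x)) j) \<partial>count_space UNIV \<partial>M)"
      by (rule nn_integral_count_space_nn_integral[symmetric]) (auto intro: bm)
    also have "\<dots> = (\<integral>\<^sup>+x. 1 \<partial>M)"
      by (simp add: nn_integral_pmf measure_pmf.emeasure_space_1[simplified])
    also have "\<dots> = 1" using Mprob by (simp add: prob_space.emeasure_space_1)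
    finally show ?thesis .
  qed
qed (rule poi_mix_nonneg)

lemma countable_C: "countable {c::nat\<Rightarrow>nat. \<forall>x. x \<notin> I \<longrightarrow> c x = 0}"
proof -
  have "{c::nat\<Rightarrow>nat. \<forall>x. x \<notin> I \<longrightarrow> c x = 0} = (\<lambda>h x. if x \<in> I then h x else 0) ` PiE I (\<lambda>_. UNIV)"
    using dflt_image_PiE[of I 0 "\<lambda>_. UNIV::nat set"] by (simp add: PiE_dflt_def)
  then show ?thesis using finI by (auto intro!: countable_image countable_PiE)
qed

lemma pmf_Pu_meas: "(\<lambda>u. ennreal (pmf (Pu u) c)) \<in> borel_measurable P"
proof -
  have "(\<lambda>u. pmf (Pu u) c) = (\<lambda>u. if (\<forall>x. x \<notin> I \<longrightarrow> c x = 0) then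
           \<Prod>i\<in>I. pmf (poi (mm * cl (u i))) (c i) else 0)"
    by (simp add: Pu_def pmf_Pi[OF finI])
  moreover have "(\<lambda>u. \<Prod>i\<in>I. pmf (poi (mm * cl (u i))) (c i)) \<in> borel_measurable P"
    by (intro borel_measurable_prod comp_meas[where g="\<lambda>x. pmf (poi (mm * cl x)) _"]) auto
  ultimately show ?thesis by auto
qed

lemma interchange:
  fixes h :: "(nat \<Rightarrow> nat) \<Rightarrow> ennreal"
  shows "(\<integral>\<^sup>+c. h c \<partial>measure_pmf (Pi_pmf I 0 (\<lambda>_. qM))) = (\<integral>\<^sup>+u. (\<integral>\<^sup>+c. h c \<partial>measure_pmf (Pu u)) \<partial>P)"
proof -
  define C where "C = {c::nat\<Rightarrow>nat. \<forall>x. x \<notin> I \<longrightarrow> c x = 0}"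
  have cC: "countable C" using countable_C by (simp add: C_def)
  have restr: "(\<integral>\<^sup>+c. ennreal (pmf Q c) * h c \<partial>count_space UNIV) = (\<integral>\<^sup>+c. ennreal (pmf Q c) * h c \<partial>count_space C)"
    if "\<And>c. c \<notin> C \<Longrightarrow> pmf Q c = 0" for Q
    by (subst nn_integral_count_space_indicator) (auto intro!: nn_integral_cong simp: indicator_def that)
  have nC: "\<not> (\<forall>x. x \<notin> I \<longrightarrow> c x = 0)" if "c \<notin> C" for c
    using that by (simp add: C_def)
  have Q0: "pmf (Pi_pmf I 0 (\<lambda>_. qM)) c = 0" if "c \<notin> C" for c
    by (simp only: pmf_Pi[OF finI] if_not_P[OF nC[OF that]])
  have U0: "pmf (Pu u) c = 0" if "c \<notin> C" for c u
    unfolding Pu_def by (simp only: pmf_Pi[OF finI] if_not_P[OF nC[OF that]])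
  have key: "ennreal (pmf (Pi_pmf I 0 (\<lambda>_. qM)) c) = (\<integral>\<^sup>+u. ennreal (pmf (Pu u) c) \<partial>P)" if "c \<in> C" for c
  proof -
    have "ennreal (pmf (Pi_pmf I 0 (\<lambda>_. qM)) c) = ennreal (\<Prod>i\<in>I. poi_mix M mm (c i))"
      using that finI by (simp add: pmf_Pi C_def pmf_qM)
    also have "\<dots> = (\<Prod>i\<in>I. ennreal (poi_mix M mm (c i)))"
      by (rule prod_ennreal[symmetric]) (rule poi_mix_nonneg)
    also have "\<dots> = (\<Prod>i\<in>I. \<integral>\<^sup>+x. ennreal (pmf (poi (mm * cl x)) (c i)) \<partial>M)"
      by (simp add: ennreal_poi_mix)
    also have "\<dots> = (\<integral>\<^sup>+u. (\<Prod>i\<in>I. ennreal (pmf (poi (mm * cl (u i))) (c i))) \<partial>P)"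
      by (rule PS.product_nn_integral_prod[symmetric]) (auto intro: finI bm)
    also have "\<dots> = (\<integral>\<^sup>+u. ennreal (pmf (Pu u) c) \<partial>P)"
      using that finI by (intro nn_integral_cong) (simp add: Pu_def pmf_Pi C_def prod_ennreal)
    finally show ?thesis .
  qed
  have "(\<integral>\<^sup>+c. h c \<partial>measure_pmf (Pi_pmf I 0 (\<lambda>_. qM))) =
        (\<integral>\<^sup>+c. ennreal (pmf (Pi_pmf I 0 (\<lambda>_. qM)) c) * h c \<partial>count_space C)"
    by (simp add: nn_integral_measure_pmf restr[OF Q0])
  also have "\<dots> = (\<integral>\<^sup>+c. (\<integral>\<^sup>+u. ennreal (pmf (Pu u) c) * h c \<partial>P) \<partial>count_space C)"
    by (intro nn_integral_cong) (simp add: key nn_integral_multc pmf_Pu_meas)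
  also have "\<dots> = (\<integral>\<^sup>+u. (\<integral>\<^sup>+c. ennreal (pmf (Pu u) c) * h c \<partial>count_space C) \<partial>P)"
    by (rule nn_integral_count_space_nn_integral[symmetric]) (use cC pmf_Pu_meas in auto)
  also have "\<dots> = (\<integral>\<^sup>+u. (\<integral>\<^sup>+c. h c \<partial>measure_pmf (Pu u)) \<partial>P)"
    by (intro nn_integral_cong) (simp add: nn_integral_measure_pmf restr[OF U0])
  finally show ?thesis .
qed

lemma second_moment:
  fixes g :: "real \<Rightarrow> real"
  assumes gm[measurable]: "g \<in> borel_measurable borel" and gB: "\<And>x. \<bar>g x\<bar> \<le> B" and g0: "(\<integral>x. g x \<partial>M) = 0"
  shows "(\<integral>u. (\<Sum>i\<in>I. g (u i))^2 \<partial>P) = real (card I) * (\<integral>x. (g x)^2 \<partial>M)"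
proof -
  have B0: "0 \<le> B" using gB[of 0] by linarith
  have ci: "(\<lambda>u. g (u i)) \<in> borel_measurable P" if "i \<in> I" for i
    using comp_meas[OF gm that] .
  have intij: "integrable P (\<lambda>u. g (u i) * g (u j))" if "i \<in> I" "j \<in> I" for i j
  proof (rule integrable_P_bounded[where B="B*B"])
    show "(\<lambda>u. g (u i) * g (u j)) \<in> borel_measurable P" using ci that by auto
    show "\<bar>g (u i) * g (u j)\<bar> \<le> B * B" for u
      by (simp add: abs_mult mult_mono gB B0)
  qed
  have tm: "(\<integral>u. g (u i) * g (u j) \<partial>P) = (if i = j then (\<integral>x. (g x)^2 \<partial>M) else 0)"
    if ij: "i \<in> I" "j \<in> I" for i j
  proof (cases "i = j")
    case True
    then show ?thesis using integral_comp[OF ij(1), of "\<lambda>x. (g x)^2"]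
      by (simp add: power2_eq_square)
  next
    case False
    define f where "f = (\<lambda>l::nat. if l = i \<or> l = j then g else (\<lambda>_::real. 1::real))"
    have "(\<Prod>l\<in>I. f l (u l)) = g (u i) * g (u j)" for u
    proof -
      have "(\<Prod>l\<in>I. f l (u l)) = (\<Prod>l\<in>{i,j}. f l (u l))"
        using ij finI by (intro prod.mono_neutral_right) (auto simp: f_def)
      then show ?thesis using False by (simp add: f_def)
    qed
    then have "(\<integral>u. g (u i) * g (u j) \<partial>P) = (\<integral>u. (\<Prod>l\<in>I. f l (u l)) \<partial>P)" by simp
    also have "\<dots> = (\<Prod>l\<in>I. (\<integral>x. f l x \<partial>M))"
      by (rule PS.product_integral_prod[OF finI])
         (auto simp: f_def intro!: integrable_M_bounded[where B=B] gB)
    also have "\<dots> = 0"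
      using ij finI by (intro prod_zero) (auto simp: f_def g0)
    finally show ?thesis using False by simp
  qed
  have "(\<integral>u. (\<Sum>i\<in>I. g (u i))^2 \<partial>P) = (\<integral>u. (\<Sum>i\<in>I. \<Sum>j\<in>I. g (u i) * g (u j)) \<partial>P)"
    by (simp add: power2_eq_square sum_product)
  also have "\<dots> = (\<Sum>i\<in>I. \<Sum>j\<in>I. (\<integral>u. g (u i) * g (u j) \<partial>P))"
    using intij by (simp add: integral_sum)
  also have "\<dots> = (\<Sum>i\<in>I. \<Sum>j\<in>I. (if i = j then (\<integral>x. (g x)^2 \<partial>M) else 0))"
    by (intro sum.cong refl) (simp add: tm)
  also have "\<dots> = real (card I) * (\<integral>x. (g x)^2 \<partial>M)"
    using finI by simp
  finally show ?thesis .
qed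

end




definition Dk :: "nat set \<Rightarrow> nat \<Rightarrow> (nat list \<Rightarrow> bool pmf) \<Rightarrow> (nat \<Rightarrow> nat) \<Rightarrow> bool pmf" where
  "Dk I k T c = (if k \<le> (\<Sum>i\<in>I. c i) then bind_pmf (pmf_of_set (permutations_of_multiset (cmset I c)))
                       (\<lambda>ys. T (take k ys)) else return_pmf False)"

lemma bool_pmf: "pmf B True = 1 - pmf B False"
proof -
  have "set_pmf B \<subseteq> UNIV" by simp
  with sum_pmf_eq_1[of "UNIV::bool set" B] have "(\<Sum>x\<in>UNIV. pmf B x) = 1" by simp
  then show ?thesis by (simp add: UNIV_bool)
qed

lemma l1_norm_bounds:
  fixes v :: "nat \<Rightarrow> real"
  assumes "finite I" "\<And>i. i \<in> I \<Longrightarrow> 0 \<le> v i" "V = (\<Sum>i\<in>I. v i)" "V > 0"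
  shows "\<bar>(\<Sum>i\<in>I. \<bar>v i / V - c\<bar>) - (\<Sum>i\<in>I. \<bar>v i - c\<bar>)\<bar> \<le> \<bar>1 - V\<bar>"
proof -
  have "\<bar>(\<Sum>i\<in>I. \<bar>v i / V - c\<bar>) - (\<Sum>i\<in>I. \<bar>v i - c\<bar>)\<bar> = \<bar>\<Sum>i\<in>I. (\<bar>v i / V - c\<bar> - \<bar>v i - c\<bar>)\<bar>"
    by (simp add: sum_subtractf)
  also have "\<dots> \<le> (\<Sum>i\<in>I. \<bar>\<bar>v i / V - c\<bar> - \<bar>v i - c\<bar>\<bar>)" by (rule sum_abs)
  also have "\<dots> \<le> (\<Sum>i\<in>I. v i * (\<bar>1 - V\<bar> / V))"
  proof (intro sum_mono)
    fix i assume i: "i \<in> I"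
    have "\<bar>\<bar>v i / V - c\<bar> - \<bar>v i - c\<bar>\<bar> \<le> \<bar>v i / V - v i\<bar>" by linarith
    also have "v i / V - v i = v i * ((1 - V) / V)" using assms(4) by (simp add: field_simps)
    also have "\<bar>v i * ((1 - V) / V)\<bar> = v i * (\<bar>1 - V\<bar> / V)"
      using assms(2)[OF i] assms(4) by (simp add: abs_mult)
    finally show "\<bar>\<bar>v i / V - c\<bar> - \<bar>v i - c\<bar>\<bar> \<le> v i * (\<bar>1 - V\<bar> / V)" .
  qed
  also have "\<dots> = V * (\<bar>1 - V\<bar> / V)" unfolding assms(3) by (rule sum_distrib_right[symmetric])
  also have "\<dots> = \<bar>1 - V\<bar>" using assms(4) by simp
  finally show ?thesis .
qed

lemma V_minus_1:
  fixes v :: "nat \<Rightarrow> real"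
  assumes "finite I" "card I = n" "n > 0"
  shows "\<bar>(\<Sum>i\<in>I. v i) - 1\<bar> \<le> (\<Sum>i\<in>I. \<bar>v i - 1 / n\<bar>)"
proof -
  have "(\<Sum>i\<in>I. v i) - 1 = (\<Sum>i\<in>I. (v i - 1 / n))"
    using assms by (simp add: sum_subtractf)
  also have "\<bar>\<dots>\<bar> \<le> (\<Sum>i\<in>I. \<bar>v i - 1 / n\<bar>)" by (rule sum_abs)
  finally show ?thesis .
qed

lemma poi_ge_k:
  assumes "200 \<le> mm" "real k < mm / 2" "9/10 \<le> V"
  shows "measure_pmf.prob (poi (mm * V)) {k..} \<ge> 10/11"
proof -
  have r: "0 \<le> mm * V" using assms by simp
  have c: "{k..} = UNIV - {..<k}" by auto
  have "measure_pmf.prob (poi (mm * V)) {k..} = 1 - measure_pmf.prob (poi (mm * V)) {..<k}"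
    unfolding c by (subst measure_pmf.prob_compl[symmetric]) auto
  moreover have "measure_pmf.prob (poi (mm * V)) {..<k} \<le> 1/11"
  proof -
    have "(3/2::real) \<le> exp (1/2)" using exp_ge_add_one_self[of "1/2::real"] by simp
    then have "(3/2::real) ^ k \<le> exp (1/2) ^ k" by (intro power_mono) auto
    also have "\<dots> = exp (real k / 2)" by (simp flip: exp_of_nat_mult)
    finally have e1: "(3/2::real) ^ k \<le> exp (real k / 2)" .
    have "(3/2) ^ k * exp (- (mm * V) / 3) \<le> exp (real k / 2) * exp (- (mm * V) / 3)"
      by (intro mult_right_mono e1) auto
    also have "\<dots> = exp (real k / 2 - mm * V / 3)" by (simp flip: exp_add)
    also have "\<dots> \<le> exp (- (mm / 20))"
    proof (intro exp_mono)
      have VM: "9/10 * mm \<le> mm * V" using assms by (subst mult.commute) (intro mult_right_mono, auto)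
      show "real k / 2 - mm * V / 3 \<le> - (mm / 20)" using assms VM by linarith
    qed
    also have "\<dots> \<le> 1/11"
    proof -
      have "11 \<le> 1 + mm / 20" using assms by simp
      also have "\<dots> \<le> exp (mm / 20)" by (rule exp_ge_add_one_self)
      finally show ?thesis by (simp add: exp_minus field_simps)
    qed
    finally show ?thesis using poi_tail[OF r, of k] by linarith
  qed
  ultimately show ?thesis by linarith
qed

lemma ennreal_integral_le:
  fixes g :: "'a \<Rightarrow> real"
  assumes "integrable M g"
  shows "ennreal (integral\<^sup>L M g) \<le> (\<integral>\<^sup>+x. ennreal (g x) \<partial>M)"
proof -
  have "integral\<^sup>L M g \<le> integral\<^sup>L M (\<lambda>x. max 0 (g x))"
    using assms by (intro integral_mono) auto
  then have "ennreal (integral\<^sup>L M g) \<le> ennreal (integral\<^sup>L M (\<lambda>x. max 0 (g x)))"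
    by (rule ennreal_leI)
  also have "\<dots> = (\<integral>\<^sup>+x. ennreal (max 0 (g x)) \<partial>M)"
    using assms by (intro nn_integral_eq_integral[symmetric]) auto
  also have "\<dots> = (\<integral>\<^sup>+x. ennreal (g x) \<partial>M)"
    by (intro nn_integral_cong) (auto simp: max_def ennreal_neg)
  finally show ?thesis .
qed

context mixsetup
begin

definition V :: "(nat \<Rightarrow> real) \<Rightarrow> real" where "V u = (\<Sum>i\<in>I. cl (u i))"
definition pu :: "(nat \<Rightarrow> real) \<Rightarrow> nat pmf" where
  "pu u = embed_pmf (\<lambda>i. if i \<in> I then cl (u i) / V u else 0)"

lemma V_nonneg: "0 \<le> V u" unfolding V_def by (intro sum_nonneg cl_nonneg)

lemma pmf_pu: assumes "V u > 0" shows "pmf (pu u) i = (if i \<in> I then cl (u i) / V u else 0)"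
  unfolding pu_def
proof (rule pmf_embed_pmf)
  show "\<integral>\<^sup>+ x. ennreal (if x \<in> I then cl (u x) / V u else 0) \<partial>count_space UNIV = 1"
  proof -
    have "(\<integral>\<^sup>+ x. ennreal (if x \<in> I then cl (u x) / V u else 0) \<partial>count_space UNIV) =
          (\<integral>\<^sup>+ x. ennreal (cl (u x) / V u) \<partial>count_space I)"
      by (subst nn_integral_count_space_indicator) (auto intro!: nn_integral_cong simp: indicator_def)
    also have "\<dots> = (\<Sum>x\<in>I. ennreal (cl (u x) / V u))"
      using finI by (simp add: nn_integral_count_space_finite)
    also have "\<dots> = ennreal (\<Sum>x\<in>I. cl (u x) / V u)"
      using assms by (intro sum_ennreal) (auto intro!: divide_nonneg_pos cl_nonneg)
    also have "(\<Sum>x\<in>I. cl (u x) / V u) = 1"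
      using assms by (simp add: sum_divide_distrib[symmetric] V_def)
    finally show ?thesis by simp
  qed
qed (use assms in \<open>auto intro!: divide_nonneg_pos cl_nonneg\<close>)

lemma set_pu: assumes "V u > 0" shows "set_pmf (pu u) \<subseteq> I"
  using pmf_pu[OF assms] by (auto simp: set_pmf_iff split: if_splits)

lemma phi_formula:
  assumes "0 < mm" "V u > 0"
  shows "pmf (bind_pmf (Pu u) (Dk I k T)) True =
         pmf (bind_pmf (replicate_pmf k (pu u)) T) True * measure_pmf.prob (poi (mm * V u)) {k..}"
proof -
  have mx: "max 0 (mm * cl (u i)) = mm * cl (u i)" for i using assms cl_nonneg[of "u i"] by simp
  have S: "mm * V u = (\<Sum>i\<in>I. max 0 (mm * cl (u i)))" by (simp add: mx V_def sum_distrib_left)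
  have Spos: "mm * V u > 0" using assms by simp
  have p: "pmf (pu u) i = (if i \<in> I then max 0 (mm * cl (u i)) / (mm * V u) else 0)" for i
    using assms by (simp add: pmf_pu mx)
  show ?thesis unfolding Pu_def
    by (rule fixed_formula[OF finI S Spos p]) (simp add: Dk_def fun_eq_iff)
qed

lemma sum_comp_meas:
  fixes g :: "real \<Rightarrow> real"
  assumes "g \<in> borel_measurable borel"
  shows "(\<lambda>u. \<Sum>i\<in>I. g (u i)) \<in> borel_measurable P"
  using assms by (intro borel_measurable_sum comp_meas)

lemma sum_comp_bound:
  fixes g :: "real \<Rightarrow> real"
  assumes "\<And>x. \<bar>g x\<bar> \<le> B"
  shows "\<bar>\<Sum>i\<in>I. g (u i)\<bar> \<le> real (card I) * B"
proof -
  have "\<bar>\<Sum>i\<in>I. g (u i)\<bar> \<le> (\<Sum>i\<in>I. \<bar>g (u i)\<bar>)" by (rule sum_abs)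
  also have "\<dots> \<le> (\<Sum>i\<in>I. B)" by (intro sum_mono assms)
  finally show ?thesis by simp
qed

lemma int_sum_comp:
  fixes g :: "real \<Rightarrow> real"
  assumes gm: "g \<in> borel_measurable borel" and gB: "\<And>x. \<bar>g x\<bar> \<le> B"
  shows "integrable P (\<lambda>u. \<Sum>i\<in>I. g (u i))"
    and "integrable P (\<lambda>u. (\<Sum>i\<in>I. g (u i))^2)"
    and "(\<integral>u. (\<Sum>i\<in>I. g (u i)) \<partial>P) = real (card I) * (\<integral>x. g x \<partial>M)"
proof -
  show i1: "integrable P (\<lambda>u. \<Sum>i\<in>I. g (u i))"
    by (rule integrable_P_bounded[OF sum_comp_meas[OF gm] sum_comp_bound[OF gB]])
  show "integrable P (\<lambda>u. (\<Sum>i\<in>I. g (u i))^2)"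
  proof (rule integrable_P_bounded[where B="(real (card I) * B)^2"])
    show "(\<lambda>u. (\<Sum>i\<in>I. g (u i))^2) \<in> borel_measurable P" using sum_comp_meas[OF gm] by measurable
    fix u
    have "\<bar>\<Sum>i\<in>I. g (u i)\<bar> \<le> real (card I) * B" by (rule sum_comp_bound[OF gB])
    then have "\<bar>\<Sum>i\<in>I. g (u i)\<bar>^2 \<le> (real (card I) * B)^2" by (intro power_mono) auto
    then show "\<bar>(\<Sum>i\<in>I. g (u i))^2\<bar> \<le> (real (card I) * B)^2" by simp
  qed
  have "(\<integral>u. (\<Sum>i\<in>I. g (u i)) \<partial>P) = (\<Sum>i\<in>I. (\<integral>u. g (u i) \<partial>P))"
    by (rule Bochner_Integration.integral_sum) (auto intro!: integrable_P_bounded[where B=B] comp_meas gm gB)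
  also have "\<dots> = (\<Sum>i\<in>I. (\<integral>x. g x \<partial>M))" by (intro sum.cong refl integral_comp gm)
  finally show "(\<integral>u. (\<Sum>i\<in>I. g (u i)) \<partial>P) = real (card I) * (\<integral>x. g x \<partial>M)" by simp
qed

lemma int_cl:
  fixes f :: "real \<Rightarrow> real"
  assumes "f \<in> borel_measurable borel"
  shows "(\<integral>x. f (cl x) \<partial>M) = (\<integral>x. f x \<partial>M)"
  using AE_cl by (intro integral_cong_AE bm) (use assms in \<open>auto elim: eventually_mono\<close>)

lemma int_x: "(\<integral>x. cl x \<partial>M) = (\<integral>x. x \<partial>M)"
  using int_cl[of "\<lambda>x. x"] by simp

lemma mean_in_ab: "a \<le> (\<integral>x. x \<partial>M)" "(\<integral>x. x \<partial>M) \<le> b"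
proof -
  have "(\<integral>x. a \<partial>M) \<le> (\<integral>x. cl x \<partial>M)"
    by (intro integral_mono integrable_M_bounded[where B="\<bar>a\<bar> + \<bar>b\<bar>"])
       (auto simp: cl_ge abs_le_iff cl_def ab)
  then show "a \<le> (\<integral>x. x \<partial>M)" by (simp add: int_x PS.M.prob_space)
  have "(\<integral>x. cl x \<partial>M) \<le> (\<integral>x. b \<partial>M)"
    by (intro integral_mono integrable_M_bounded[where B="\<bar>a\<bar> + \<bar>b\<bar>"])
       (auto simp: cl_le abs_le_iff cl_def ab)
  then show "(\<integral>x. x \<partial>M) \<le> b" by (simp add: int_x PS.M.prob_space)
qed

end




context mixsetup
begin

lemma l1_pu:
  assumes In: "I = {1..n}" and Vp: "V u > 0"
  shows "l1_unif n (pu u) = (\<Sum>i\<in>I. \<bar>cl (u i) / V u - 1 / real n\<bar>)"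
proof -
  have "l1_unif n (pu u) = (\<Sum>i\<in>I. \<bar>pmf (pu u) i - 1 / real n\<bar>)"
    by (simp only: l1_unif_def In[symmetric])
  also have "\<dots> = (\<Sum>i\<in>I. \<bar>cl (u i) / V u - 1 / real n\<bar>)"
    by (intro sum.cong refl) (simp add: pmf_pu[OF Vp])
  finally show ?thesis .
qed

lemma lower_world:
  assumes In: "I = {1..n}" and n0: "n > 0" and mm: "200 \<le> mm" and km: "real k < mm / 2"
   and mean: "(\<integral>x. x \<partial>M) = 1 / real n" and dev: "(\<integral>x. \<bar>x - 1 / real n\<bar> \<partial>M) \<le> e1 / real n"
   and e1: "0 \<le> e1" "e1 \<le> 1/50"
   and tst: "\<And>p. set_pmf p \<subseteq> {1..n} \<Longrightarrow> l1_unif n p \<le> 25 * e1 \<Longrightarrow>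
                 measure_pmf.prob (bind_pmf (replicate_pmf k p) T) {True} \<ge> 4/5"
  shows "ennreal (32/55) \<le> (\<integral>\<^sup>+u. ennreal (pmf (bind_pmf (Pu u) (Dk I k T)) True) \<partial>P)"
proof -
  define X where "X u = (\<Sum>i\<in>I. \<bar>cl (u i) - 1 / real n\<bar>)" for u
  define phi where "phi u = pmf (bind_pmf (Pu u) (Dk I k T)) True" for u
  have cardI: "card I = n" using In by simp
  have X0: "0 \<le> X u" for u unfolding X_def by (intro sum_nonneg) auto
  have pw: "8/11 \<le> phi u" if X1: "X u \<le> 1/10" and X2: "2 * X u \<le> 25 * e1" for u
  proof -
    have "\<bar>V u - 1\<bar> \<le> X u"
      unfolding V_def X_def using V_minus_1[OF finI cardI n0, of "\<lambda>i. cl (u i)"] .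
    then have V9: "9/10 \<le> V u" using X1 by linarith
    then have Vp: "V u > 0" by linarith
    have nn: "\<And>i. i \<in> I \<Longrightarrow> 0 \<le> cl (u i)" using cl_nonneg by auto
    have "l1_unif n (pu u) \<le> X u + \<bar>1 - V u\<bar>"
      using l1_norm_bounds[OF finI nn V_def[of u] Vp, where c = "1 / real n"]
      unfolding l1_pu[OF In Vp] X_def by (simp add: abs_le_iff)
    also have "\<dots> \<le> 25 * e1" using \<open>\<bar>V u - 1\<bar> \<le> X u\<close> X2 by linarith
    finally have "measure_pmf.prob (bind_pmf (replicate_pmf k (pu u)) T) {True} \<ge> 4/5"
      using tst[of "pu u"] set_pu[OF Vp] In by auto
    then have t: "4/5 \<le> pmf (bind_pmf (replicate_pmf k (pu u)) T) True"
      by (simp add: measure_pmf_single)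
    have pr: "10/11 \<le> measure_pmf.prob (poi (mm * V u)) {k..}"
      by (rule poi_ge_k[OF mm km V9])
    have "(4/5) * (10/11) \<le> pmf (bind_pmf (replicate_pmf k (pu u)) T) True * measure_pmf.prob (poi (mm * V u)) {k..}"
      by (intro mult_mono t pr) auto
    then show ?thesis unfolding phi_def using phi_formula[of u k T] mm Vp by simp
  qed
  have hm: "(\<lambda>x. \<bar>cl x - 1 / real n\<bar>) \<in> borel_measurable borel" by measurable
  have n1: "0 \<le> 1 / real n" "1 / real n \<le> 1" using n0 by auto
  have hB: "\<bar>\<bar>cl x - 1 / real n\<bar>\<bar> \<le> b + 1" for x
  proof -
    have h1: "cl x - 1 / real n \<le> b + 1" using cl_le[of x] n1(1) by linarith
    have h2: "1 / real n - cl x \<le> b + 1" using n1(2) cl_nonneg[of x] a0 ab by linarith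
    show ?thesis unfolding abs_abs abs_le_iff using h1 h2 by linarith
  qed
  have Xint: "integrable P X" unfolding X_def by (rule int_sum_comp(1)[OF hm hB])
  have EX: "(\<integral>u. X u \<partial>P) \<le> e1"
  proof -
    have "(\<integral>u. X u \<partial>P) = real n * (\<integral>x. \<bar>cl x - 1 / real n\<bar> \<partial>M)"
      unfolding X_def using int_sum_comp(3)[OF hm hB] cardI by simp
    also have "(\<integral>x. \<bar>cl x - 1 / real n\<bar> \<partial>M) = (\<integral>x. \<bar>x - 1 / real n\<bar> \<partial>M)"
      using int_cl[of "\<lambda>x. \<bar>x - 1 / real n\<bar>"] by simp
    also have "real n * \<dots> \<le> real n * (e1 / real n)" using dev by (intro mult_left_mono) auto
    also have "\<dots> = e1" using n0 by simp
    finally show ?thesis .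
  qed
  show ?thesis
  proof (cases "e1 = 0")
    case True
    have "AE u in P. X u = 0"
    proof -
      have "0 \<le> (\<integral>u. X u \<partial>P)" by (intro Bochner_Integration.integral_nonneg X0)
      then have "(\<integral>u. X u \<partial>P) = 0" using EX True by simp
      then show ?thesis using integral_nonneg_eq_0_iff_AE[OF Xint] X0 by auto
    qed
    then have "AE u in P. ennreal (8/11) \<le> ennreal (phi u)"
    proof eventually_elim
      case (elim u)
      then have "8/11 \<le> phi u" using pw[of u] True by simp
      then show ?case by (rule ennreal_leI)
    qed
    then have le: "(\<integral>\<^sup>+u. ennreal (8/11) \<partial>P) \<le> (\<integral>\<^sup>+u. ennreal (phi u) \<partial>P)"
      by (rule nn_integral_mono_AE)
    have "ennreal (32/55) \<le> ennreal (8/11)" by (intro ennreal_leI) simp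
    also have "ennreal (8/11) = (\<integral>\<^sup>+u. ennreal (8/11) \<partial>P)"
      by (simp add: PS.P.emeasure_space_1)
    also note le
    finally show ?thesis unfolding phi_def .
  next
    case False
    then have e1p: "e1 > 0" using e1 by simp
    define \<beta> where "\<beta> = min (25 * e1 / 2) (1/10)"
    have bp: "\<beta> > 0" using e1p by (simp add: \<beta>_def)
    define g where "g u = (8/11) * (1 - X u / \<beta>)" for u
    have gle: "ennreal (g u) \<le> ennreal (phi u)" for u
    proof (cases "X u \<le> \<beta>")
      case True
      then have "8/11 \<le> phi u" using pw[of u] by (simp add: \<beta>_def)
      moreover have "g u \<le> 8/11" unfolding g_def using X0[of u] bp by simp
      ultimately show ?thesis by (intro ennreal_leI) simp
    next
      case False
      then have "g u \<le> 0" unfolding g_def using bp by (simp add: field_simps)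
      then show ?thesis by (simp add: ennreal_neg)
    qed
    have gint: "integrable P g" unfolding g_def using Xint by simp
    have Eg: "(\<integral>u. g u \<partial>P) = (8/11) * (1 - (\<integral>u. X u \<partial>P) / \<beta>)"
      unfolding g_def using Xint by (simp add: PS.P.prob_space)
    have "e1 / \<beta> \<le> 1/5"
    proof (cases "25 * e1 / 2 \<le> 1/10")
      case True
      then have "\<beta> = 25 * e1 / 2" by (simp add: \<beta>_def)
      then show ?thesis using e1p by simp
    next
      case False
      then have "\<beta> = 1/10" by (simp add: \<beta>_def)
      then show ?thesis using e1 by simp
    qed
    moreover have "(\<integral>u. X u \<partial>P) / \<beta> \<le> e1 / \<beta>" using EX bp by (simp add: divide_right_mono)
    ultimately have "32/55 \<le> (\<integral>u. g u \<partial>P)" unfolding Eg by simp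
    then have "ennreal (32/55) \<le> ennreal (\<integral>u. g u \<partial>P)" by (rule ennreal_leI)
    also have "\<dots> \<le> (\<integral>\<^sup>+u. ennreal (g u) \<partial>P)" by (rule ennreal_integral_le[OF gint])
    also have "\<dots> \<le> (\<integral>\<^sup>+u. ennreal (phi u) \<partial>P)" by (intro nn_integral_mono gle)
    finally show ?thesis unfolding phi_def .
  qed
qed

end




context mixsetup
begin

lemma upper_world:
  assumes In: "I = {1..n}" and n0: "n > 0" and mm: "0 < mm"
   and mean: "(\<integral>x. x \<partial>M) = 1 / real n"
   and e2: "0 < e2" "e2 \<le> 1" "e2 / real n \<le> (\<integral>x. \<bar>x - 1 / real n\<bar> \<partial>M)" "b - a \<le> e2^2 / 1000"
   and tst: "\<And>p. set_pmf p \<subseteq> {1..n} \<Longrightarrow> l1_unif n p \<ge> e2 / 2 \<Longrightarrow>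
                 measure_pmf.prob (bind_pmf (replicate_pmf k p) T) {False} \<ge> 4/5"
  shows "(\<integral>\<^sup>+u. ennreal (pmf (bind_pmf (Pu u) (Dk I k T)) True) \<partial>P) \<le> ennreal (27/125)"
proof -
  define phi where "phi u = pmf (bind_pmf (Pu u) (Dk I k T)) True" for u
  define h where "h x = \<bar>cl x - 1 / real n\<bar>" for x
  define \<mu> where "\<mu> = (\<integral>x. h x \<partial>M)"
  have cardI: "card I = n" using In by simp
  have n1: "0 < 1 / real n" "1 / real n \<le> 1" using n0 by auto
  have hm[measurable]: "h \<in> borel_measurable borel" unfolding h_def by measurable
  have clm[measurable]: "cl \<in> borel_measurable borel" by (rule cl_meas)
  have mu_eq: "\<mu> = (\<integral>x. \<bar>x - 1 / real n\<bar> \<partial>M)"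
    unfolding \<mu>_def h_def using int_cl[of "\<lambda>x. \<bar>x - 1 / real n\<bar>"] by simp
  have aN: "a \<le> 1 / real n" "1 / real n \<le> b" using mean_in_ab mean by auto
  have h0: "0 \<le> h x" for x unfolding h_def by simp
  have hba: "h x \<le> b - a" for x
    unfolding h_def using cl_ge[of x] cl_le[of x] aN by (auto simp: abs_le_iff)
  have hint: "integrable M h" by (rule integrable_M_bounded[where B="b - a"]) (use h0 hba in auto)
  have h2int: "integrable M (\<lambda>x. (h x)^2)"
    by (rule integrable_M_bounded[where B="(b - a)^2"])
       (use h0 hba in \<open>auto intro!: power_mono\<close>)
  have clint: "integrable M cl"
    by (rule integrable_M_bounded[where B="b"]) (use cl_nonneg cl_le in auto)
  have Ecl: "(\<integral>x. cl x \<partial>M) = 1 / real n" using int_x mean by simp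
  have mu_lb: "e2 \<le> real n * \<mu>" using e2(3) mu_eq n0 by (simp add: divide_le_eq mult.commute)
  have mu_ub: "real n * \<mu> \<le> 2"
  proof -
    have "\<mu> \<le> (\<integral>x. cl x + 1 / real n \<partial>M)"
      unfolding \<mu>_def h_def using clint
      by (intro integral_mono) (auto intro!: integrable_M_bounded[where B="b + 1"] simp: abs_le_iff cl_nonneg
           intro: order_trans[OF _ cl_le] cl_nonneg)
    also have "\<dots> = 2 / real n" using clint Ecl by (simp add: PS.M.prob_space)
    finally show ?thesis using n0 by (simp add: field_simps)
  qed
  define s where "s = real n * \<mu>"
  have s_pos: "0 < s" using mu_lb e2 by (simp add: s_def)
  have Eh2: "(\<integral>x. (h x)^2 \<partial>M) \<le> (b - a) * \<mu>"
  proof -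
    have "(\<integral>x. (h x)^2 \<partial>M) \<le> (\<integral>x. (b - a) * h x \<partial>M)"
      using h2int hint
    proof (intro integral_mono)
      fix x show "(h x)^2 \<le> (b - a) * h x"
        using h0[of x] hba[of x] by (simp add: power2_eq_square mult_right_mono)
    qed auto
    then show ?thesis by (simp add: \<mu>_def)
  qed
  define g1 where "g1 x = h x - \<mu>" for x
  define g2 where "g2 x = cl x - 1 / real n" for x
  have g1m[measurable]: "g1 \<in> borel_measurable borel" unfolding g1_def by measurable
  have g2m[measurable]: "g2 \<in> borel_measurable borel" unfolding g2_def by measurable
  have mu0: "0 \<le> \<mu>" unfolding \<mu>_def by (intro Bochner_Integration.integral_nonneg h0)
  have g1B: "\<bar>g1 x\<bar> \<le> (b - a) + \<mu>" for x unfolding g1_def using h0[of x] hba[of x] mu0 by (auto simp: abs_le_iff)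
  have g2B: "\<bar>g2 x\<bar> \<le> (b - a)" for x using hba[of x] by (simp add: g2_def h_def)
  have Eg1: "(\<integral>x. g1 x \<partial>M) = 0" unfolding g1_def using hint by (simp add: \<mu>_def PS.M.prob_space)
  have Eg2: "(\<integral>x. g2 x \<partial>M) = 0" unfolding g2_def using clint Ecl by (simp add: PS.M.prob_space)
  have Eg1sq: "(\<integral>x. (g1 x)^2 \<partial>M) \<le> (b - a) * \<mu>"
  proof -
    have "(\<lambda>x. (g1 x)^2) = (\<lambda>x. (h x)^2 - 2 * \<mu> * h x + \<mu>^2)"
      by (simp add: g1_def fun_eq_iff power2_eq_square algebra_simps)
    then have "(\<integral>x. (g1 x)^2 \<partial>M) = (\<integral>x. (h x)^2 \<partial>M) - 2 * \<mu> * \<mu> + \<mu>^2"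
      using h2int hint by (simp add: PS.M.prob_space \<mu>_def)
    also have "\<dots> \<le> (\<integral>x. (h x)^2 \<partial>M)" by (simp add: power2_eq_square)
    finally show ?thesis using Eh2 by linarith
  qed
  have Eg2sq: "(\<integral>x. (g2 x)^2 \<partial>M) \<le> (b - a) * \<mu>"
  proof -
    have "(\<lambda>x. (g2 x)^2) = (\<lambda>x. (h x)^2)" by (simp add: g2_def h_def fun_eq_iff)
    then show ?thesis using Eh2 by simp
  qed
  define Y where "Y u = (\<Sum>i\<in>I. g1 (u i))" for u
  define Z where "Z u = (\<Sum>i\<in>I. g2 (u i))" for u
  define W where "W u = 8 * ((Y u)^2 + (Z u)^2) / s^2" for u
  have W0: "0 \<le> W u" for u unfolding W_def by simp
  have EY: "(\<integral>u. (Y u)^2 \<partial>P) = real n * (\<integral>x. (g1 x)^2 \<partial>M)"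
    unfolding Y_def using second_moment[OF g1m g1B Eg1] cardI by simp
  have EZ: "(\<integral>u. (Z u)^2 \<partial>P) = real n * (\<integral>x. (g2 x)^2 \<partial>M)"
    unfolding Z_def using second_moment[OF g2m g2B Eg2] cardI by simp
  have Yint: "integrable P (\<lambda>u. (Y u)^2)" unfolding Y_def by (rule int_sum_comp(2)[OF g1m g1B])
  have Zint: "integrable P (\<lambda>u. (Z u)^2)" unfolding Z_def by (rule int_sum_comp(2)[OF g2m g2B])
  have XY: "(\<Sum>i\<in>I. \<bar>cl (u i) - 1 / real n\<bar>) = Y u + s" for u
    unfolding Y_def g1_def h_def s_def using cardI by (simp add: sum_subtractf)
  have VZ: "V u = Z u + 1" for u
    unfolding Z_def g2_def V_def using cardI n0 by (simp add: sum_subtractf)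
  have pw: "phi u \<le> 1/5 + W u" for u
  proof (cases "V u > 0 \<and> (\<Sum>i\<in>I. \<bar>cl (u i) - 1 / real n\<bar>) - \<bar>1 - V u\<bar> \<ge> e2 / 2")
    case True
    then have Vp: "V u > 0" by simp
    have nn: "\<And>i. i \<in> I \<Longrightarrow> 0 \<le> cl (u i)" using cl_nonneg by auto
    have "e2 / 2 \<le> l1_unif n (pu u)"
      using l1_norm_bounds[OF finI nn V_def[of u] Vp, where c = "1 / real n"] True
      unfolding l1_pu[OF In Vp] by (simp add: abs_le_iff)
    then have "measure_pmf.prob (bind_pmf (replicate_pmf k (pu u)) T) {False} \<ge> 4/5"
      using tst[of "pu u"] set_pu[OF Vp] In by auto
    then have t: "pmf (bind_pmf (replicate_pmf k (pu u)) T) True \<le> 1/5"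
      by (simp add: measure_pmf_single bool_pmf[of _])
    have "phi u = pmf (bind_pmf (replicate_pmf k (pu u)) T) True * measure_pmf.prob (poi (mm * V u)) {k..}"
      unfolding phi_def by (rule phi_formula[OF mm Vp])
    also have "\<dots> \<le> pmf (bind_pmf (replicate_pmf k (pu u)) T) True * 1"
      by (intro mult_left_mono) auto
    finally show ?thesis using t W0[of u] by simp
  next
    case False
    have W1: "1 \<le> W u"
    proof (cases "V u > 0")
      case False
      then have "V u = 0" using V_nonneg[of u] by simp
      then have "Z u = -1" using VZ[of u] by simp
      then have "(Z u)^2 = 1" by simp
      moreover have "s^2 \<le> 4"
      proof -
        have "s \<le> 2" using mu_ub by (simp add: s_def)
        then have "s * s \<le> 2 * 2" using s_pos by (intro mult_mono) auto
        then show ?thesis by (simp add: power2_eq_square)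
      qed
      moreover have "0 \<le> (Y u)^2" by simp
      ultimately have "s^2 \<le> 8 * ((Y u)^2 + (Z u)^2)"
        by (smt (verit))
      then show ?thesis unfolding W_def using s_pos by (simp add: le_divide_eq)
    next
      case True
      with False have lt: "(\<Sum>i\<in>I. \<bar>cl (u i) - 1 / real n\<bar>) - \<bar>1 - V u\<bar> < e2 / 2" by simp
      have A: "s / 2 < \<bar>Y u\<bar> + \<bar>Z u\<bar>"
        using lt XY[of u] VZ[of u] mu_lb unfolding s_def by (simp add: abs_le_iff abs_minus_commute)
      have "(s / 2)^2 < (\<bar>Y u\<bar> + \<bar>Z u\<bar>)^2"
        using A s_pos by (intro power_strict_mono) auto
      also have "(\<bar>Y u\<bar> + \<bar>Z u\<bar>)^2 \<le> 2 * ((Y u)^2 + (Z u)^2)"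
      proof -
        have "0 \<le> (\<bar>Y u\<bar> - \<bar>Z u\<bar>)^2" by simp
        then show ?thesis by (simp add: power2_eq_square algebra_simps)
      qed
      finally have "s^2 < 8 * ((Y u)^2 + (Z u)^2)" by (simp add: power2_eq_square)
      then show ?thesis unfolding W_def using s_pos by (simp add: le_divide_eq)
    qed
    have "phi u \<le> 1" unfolding phi_def by (rule pmf_le_1)
    then show ?thesis using W1 by simp
  qed
  have Wint0: "integrable P W"
  proof -
    have Wf: "W = (\<lambda>u. (8 / s^2) * ((Y u)^2 + (Z u)^2))"
      by (simp add: W_def fun_eq_iff)
    have "integrable P (\<lambda>u. (Y u)^2 + (Z u)^2)" using Yint Zint by (rule Bochner_Integration.integrable_add)
    then show ?thesis unfolding Wf by (rule integrable_mult_right)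
  qed
  have Wint: "integrable P (\<lambda>u. 1/5 + W u)" using Wint0 by (intro Bochner_Integration.integrable_add) auto
  have EW: "(\<integral>u. 1/5 + W u \<partial>P) \<le> 27/125"
  proof -
    define EY2 where "EY2 = (\<integral>u. (Y u)^2 \<partial>P)"
    define EZ2 where "EZ2 = (\<integral>u. (Z u)^2 \<partial>P)"
    have Wf: "W = (\<lambda>u. (8 / s^2) * ((Y u)^2 + (Z u)^2))"
      by (simp add: W_def fun_eq_iff)
    have "(\<integral>u. 1/5 + W u \<partial>P) = (\<integral>u. 1/5 \<partial>P) + (\<integral>u. W u \<partial>P)"
      by (rule Bochner_Integration.integral_add) (auto intro: Wint0)
    also have "(\<integral>u. 1/5 \<partial>P) = (1/5::real)" by (simp add: PS.P.prob_space)
    also have "(\<integral>u. W u \<partial>P) = (8 / s^2) * (\<integral>u. (Y u)^2 + (Z u)^2 \<partial>P)"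
      unfolding Wf by (rule integral_mult_right_zero)
    also have "(\<integral>u. (Y u)^2 + (Z u)^2 \<partial>P) = EY2 + EZ2"
      unfolding EY2_def EZ2_def by (rule Bochner_Integration.integral_add[OF Yint Zint])
    finally have E1: "(\<integral>u. 1/5 + W u \<partial>P) = 1/5 + 8 * (EY2 + EZ2) / s^2" by simp
    have E2: "8 * (EY2 + EZ2) \<le> 16 * (b - a) * s"
    proof -
      have "EY2 + EZ2 \<le> real n * ((b - a) * \<mu>) + real n * ((b - a) * \<mu>)"
        unfolding EY2_def EZ2_def EY EZ using Eg1sq Eg2sq n0
        by (intro add_mono mult_left_mono) auto
      then show ?thesis by (simp add: s_def algebra_simps)
    qed
    have E3: "8 * (EY2 + EZ2) / s^2 \<le> 16 * (b - a) * s / s^2"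
      using E2 s_pos by (intro divide_right_mono) auto
    have "16 * (b - a) * s / s^2 = 16 * (b - a) / s"
      using s_pos by (simp add: power2_eq_square)
    also have "16 * (b - a) / s \<le> 16 * (b - a) / e2"
      using mu_lb e2 aN by (intro divide_left_mono) (auto simp: s_def)
    also have "16 * (b - a) / e2 \<le> 16 * (e2^2 / 1000) / e2"
      using e2 by (intro divide_right_mono) auto
    also have "16 * (e2^2 / 1000) / e2 = 16 * e2 / 1000"
      using e2 by (simp add: power2_eq_square)
    finally have E4: "16 * (b - a) * s / s^2 \<le> 16 * e2 / 1000" .
    show ?thesis using E1 E3 E4 e2 by linarith
  qed
  have "(\<integral>\<^sup>+u. ennreal (phi u) \<partial>P) \<le> (\<integral>\<^sup>+u. ennreal (1/5 + W u) \<partial>P)"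
    by (intro nn_integral_mono ennreal_leI pw)
  also have "\<dots> = ennreal (\<integral>u. 1/5 + W u \<partial>P)"
    by (rule nn_integral_eq_integral[OF Wint]) (use W0 in \<open>auto intro: add_nonneg_nonneg\<close>)
  also have "\<dots> \<le> ennreal (27/125)" by (intro ennreal_leI EW)
  finally show ?thesis unfolding phi_def .
qed

end




lemma no_tester:
  assumes n2: "n \<ge> 2" and d: "0 < e2" "e2 \<le> 1" "e2 / 2 \<le> d1" and ok: "tester_ok n k T d1 (e2 / 2)"
  shows False
proof -
  define t where "t = e2 * real n / (4 * (real n - 1))"
  have n1: "real n - 1 > 0" using n2 by simp
  have t0: "0 \<le> t" using d n1 by (simp add: t_def)
  have t1: "t \<le> 1"
  proof -
    have "e2 * real n \<le> 1 * real n" using d by (intro mult_right_mono) auto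
    also have "\<dots> \<le> 4 * (real n - 1)" using n2 by simp
    finally show ?thesis using n1 by (simp add: t_def divide_le_eq)
  qed
  define f where "f i = (if i \<in> {1..n} then (1 - t) / real n + (if i = 1 then t else 0) else 0)" for i
  have f0: "0 \<le> f i" for i using t0 t1 by (simp add: f_def)
  have sum1: "(\<Sum>i\<in>{1..n}. f i) = 1"
  proof -
    have "(\<Sum>i\<in>{1..n}. f i) = (\<Sum>i\<in>{1..n}. (1 - t) / real n) + (\<Sum>i\<in>{1..n}. (if i = 1 then t else 0))"
      by (simp add: f_def sum.distrib)
    also have "\<dots> = (1 - t) + t" using n2 by simp
    finally show ?thesis by simp
  qed
  define p where "p = embed_pmf f"
  have pmf_p: "pmf p i = f i" for i
    unfolding p_def
  proof (rule pmf_embed_pmf)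
    have "(\<integral>\<^sup>+ x. ennreal (f x) \<partial>count_space UNIV) = (\<integral>\<^sup>+ x. ennreal (f x) \<partial>count_space {1..n})"
      by (subst nn_integral_count_space_indicator) (auto intro!: nn_integral_cong simp: indicator_def f_def)
    also have "\<dots> = ennreal (\<Sum>i\<in>{1..n}. f i)"
      by (simp add: nn_integral_count_space_finite sum_ennreal f0)
    finally show "(\<integral>\<^sup>+ x. ennreal (f x) \<partial>count_space UNIV) = 1" using sum1 by simp
  qed (rule f0)
  have setp: "set_pmf p \<subseteq> {1..n}" by (auto simp: set_pmf_iff pmf_p f_def split: if_splits)
  have l1: "l1_unif n p = e2 / 2"
  proof -
    have sp: "{1..n} = insert 1 {2..n}" using n2 by auto
    have "l1_unif n p = (\<Sum>i\<in>{1..n}. \<bar>f i - 1 / real n\<bar>)" by (simp add: l1_unif_def pmf_p)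
    also have "\<dots> = \<bar>f 1 - 1 / real n\<bar> + (\<Sum>i\<in>{2..n}. \<bar>f i - 1 / real n\<bar>)"
      unfolding sp by (subst sum.insert) auto
    also have "(\<Sum>i\<in>{2..n}. \<bar>f i - 1 / real n\<bar>) = (\<Sum>i\<in>{2..n}. t / real n)"
      using n2 t0 by (intro sum.cong refl) (auto simp: f_def field_simps)
    also have "\<dots> = (real n - 1) * (t / real n)" using n2 by (simp add: of_nat_diff)
    also have "f 1 - 1 / real n = t - t / real n" using n2 by (simp add: f_def field_simps)
    also have "\<bar>t - t / real n\<bar> = t - t / real n"
    proof -
      have "t * 1 \<le> t * real n" using t0 n2 by (intro mult_left_mono) auto
      then have "t / real n \<le> t" using n2 by (simp add: divide_le_eq)
      then show ?thesis by simp
    qed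
    also have "t - t / real n + (real n - 1) * (t / real n) = 2 * t * (real n - 1) / real n"
      using n2 by (simp add: field_simps)
    also have "\<dots> = e2 / 2" using n1 n2 by (simp add: t_def field_simps)
    finally show ?thesis .
  qed
  have "measure_pmf.prob (bind_pmf (replicate_pmf k p) T) {True} \<ge> 4/5"
       "measure_pmf.prob (bind_pmf (replicate_pmf k p) T) {False} \<ge> 4/5"
    using ok setp l1 d unfolding tester_ok_def by auto
  then show False using bool_pmf[of "bind_pmf (replicate_pmf k p) T"] by (simp add: measure_pmf_single)
qed

lemma sum_abs_pmf_nonneg: "0 \<le> (\<Sum>j. \<bar>pmf (q::nat pmf) j - pmf q' j\<bar>)"
proof (rule suminf_nonneg)
  show "summable (\<lambda>j. \<bar>pmf q j - pmf q' j\<bar>)"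
    by (rule summable_comparison_test[OF _ summable_add[OF summable_pmf_nat[of q] summable_pmf_nat[of q']]])
       (auto intro!: exI[of _ 0] simp: abs_le_iff pmf_nonneg add_increasing add_increasing2)
qed simp

theorem theorem3p4:
  shows "\<exists>c::real > 0. \<forall>(\<epsilon>1::real) (\<epsilon>2::real) (n::nat) (m::nat) (a::real) (b::real)
            (M::real measure) (M'::real measure).
     0 \<le> \<epsilon>1 \<and> \<epsilon>1 < \<epsilon>2 \<and> \<epsilon>2 \<le> 1 \<and> n > 0 \<and> m > 0 \<and> real m \<ge> c \<and>
     0 \<le> a \<and> a < b \<and> b - a \<le> \<epsilon>2^2 / 1000 \<and>
     prob_space M \<and> sets M = sets borel \<and> (AE x in M. x \<in> {a..b}) \<and>
     prob_space M' \<and> sets M' = sets borel \<and> (AE x in M'. x \<in> {a..b}) \<and>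
     (\<integral>x. x \<partial>M) = 1 / real n \<and> (\<integral>x. x \<partial>M') = 1 / real n \<and>
     (\<integral>x. \<bar>x - 1 / real n\<bar> \<partial>M) \<le> \<epsilon>1 / real n \<and>
     (\<integral>x. \<bar>x - 1 / real n\<bar> \<partial>M') \<ge> \<epsilon>2 / real n \<and>
     tv_nat (poi_mix M (real m)) (poi_mix M' (real m)) \<le> 1 / (20 * real n)
     \<longrightarrow> (\<forall>(k::nat) (T::nat list \<Rightarrow> bool pmf).
            tester_ok n k T (25 * \<epsilon>1) (\<epsilon>2 / 2) \<longrightarrow> real k \<ge> real m / 2)"
proof (intro exI[of _ 200] conjI allI impI)
  show "(0::real) < 200" by simp
  fix \<epsilon>1 \<epsilon>2 :: real and n m :: nat and a b :: real and M M' :: "real measure" and k :: nat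
    and T :: "nat list \<Rightarrow> bool pmf"
  assume H: "0 \<le> \<epsilon>1 \<and> \<epsilon>1 < \<epsilon>2 \<and> \<epsilon>2 \<le> 1 \<and> n > 0 \<and> m > 0 \<and> real m \<ge> 200 \<and>
     0 \<le> a \<and> a < b \<and> b - a \<le> \<epsilon>2^2 / 1000 \<and>
     prob_space M \<and> sets M = sets borel \<and> (AE x in M. x \<in> {a..b}) \<and>
     prob_space M' \<and> sets M' = sets borel \<and> (AE x in M'. x \<in> {a..b}) \<and>
     (\<integral>x. x \<partial>M) = 1 / real n \<and> (\<integral>x. x \<partial>M') = 1 / real n \<and>
     (\<integral>x. \<bar>x - 1 / real n\<bar> \<partial>M) \<le> \<epsilon>1 / real n \<and>
     (\<integral>x. \<bar>x - 1 / real n\<bar> \<partial>M') \<ge> \<epsilon>2 / real n \<and>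
     tv_nat (poi_mix M (real m)) (poi_mix M' (real m)) \<le> 1 / (20 * real n)"
  assume ok: "tester_ok n k T (25 * \<epsilon>1) (\<epsilon>2 / 2)"
  show "real k \<ge> real m / 2"
  proof (rule ccontr)
    assume "\<not> real k \<ge> real m / 2"
    then have km: "real k < real m / 2" by simp
    from H have e10: "0 \<le> \<epsilon>1" and e12: "\<epsilon>1 < \<epsilon>2" and e21: "\<epsilon>2 \<le> 1" and n0: "n > 0"
      and m200: "real m \<ge> 200" and a0: "0 \<le> a" and ab: "a < b" and bae: "b - a \<le> \<epsilon>2^2 / 1000"
      and PM: "prob_space M" and SM: "sets M = sets borel" and AEM: "AE x in M. x \<in> {a..b}"
      and PM': "prob_space M'" and SM': "sets M' = sets borel" and AEM': "AE x in M'. x \<in> {a..b}"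
      and meanM: "(\<integral>x. x \<partial>M) = 1 / real n" and meanM': "(\<integral>x. x \<partial>M') = 1 / real n"
      and devM: "(\<integral>x. \<bar>x - 1 / real n\<bar> \<partial>M) \<le> \<epsilon>1 / real n"
      and devM': "(\<integral>x. \<bar>x - 1 / real n\<bar> \<partial>M') \<ge> \<epsilon>2 / real n"
      and tvh: "tv_nat (poi_mix M (real m)) (poi_mix M' (real m)) \<le> 1 / (20 * real n)"
      by auto
    have tstT: "\<And>p. set_pmf p \<subseteq> {1..n} \<Longrightarrow> l1_unif n p \<le> 25 * \<epsilon>1 \<Longrightarrow>
                 measure_pmf.prob (bind_pmf (replicate_pmf k p) T) {True} \<ge> 4/5"
      using ok unfolding tester_ok_def by blast
    have tstF: "\<And>p. set_pmf p \<subseteq> {1..n} \<Longrightarrow> l1_unif n p \<ge> \<epsilon>2 / 2 \<Longrightarrow>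
                 measure_pmf.prob (bind_pmf (replicate_pmf k p) T) {False} \<ge> 4/5"
      using ok unfolding tester_ok_def by blast
    define I where "I = {1..n}"
    have fI: "finite I" by (simp add: I_def)
    have m0: "0 \<le> real m" by simp
    have ab': "a \<le> b" using ab by simp
    interpret A: mixsetup M a b "real m" I
      by (rule mixsetup.intro[OF PM SM AEM a0 ab' m0 fI])
    interpret B: mixsetup M' a b "real m" I
      by (rule mixsetup.intro[OF PM' SM' AEM' a0 ab' m0 fI])
    have e2: "0 < \<epsilon>2" "\<epsilon>2 \<le> 1" using e10 e12 e21 by auto
    have aN: "a \<le> 1 / real n" "1 / real n \<le> b" using B.mean_in_ab meanM' by auto
    have pwB: "\<bar>B.cl x - 1 / real n\<bar> \<le> b - a" for x
    proof -
      have "a \<le> B.cl x" "B.cl x \<le> b" by (rule B.cl_ge, rule B.cl_le)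
      then show ?thesis using aN by (simp add: abs_le_iff)
    qed
    have muB: "(\<integral>x. \<bar>x - 1 / real n\<bar> \<partial>M') \<le> b - a"
    proof -
      have "(\<integral>x. \<bar>x - 1 / real n\<bar> \<partial>M') = (\<integral>x. \<bar>B.cl x - 1 / real n\<bar> \<partial>M')"
        using B.int_cl[of "\<lambda>x. \<bar>x - 1 / real n\<bar>"] by simp
      also have "\<dots> \<le> (\<integral>x. b - a \<partial>M')"
        by (intro integral_mono B.integrable_M_bounded[where B="b - a"]) (use ab in \<open>auto intro: pwB\<close>)
      also have "\<dots> = b - a" by (simp add: B.PS.M.prob_space)
      finally show ?thesis .
    qed
    have n2: "n \<ge> 2"
    proof -
      have "\<epsilon>2 / real n \<le> \<epsilon>2^2 / 1000" using devM' bae muB by linarith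
      then have "1000 * \<epsilon>2 \<le> \<epsilon>2^2 * real n" using n0 by (simp add: field_simps)
      then have "1000 * \<epsilon>2 \<le> \<epsilon>2 * (\<epsilon>2 * real n)" by (simp add: power2_eq_square mult.assoc)
      then have "1000 \<le> \<epsilon>2 * real n" using e2 by simp
      also have "\<dots> \<le> 1 * real n" using e2 by (intro mult_right_mono) auto
      finally show ?thesis by simp
    qed
    show False
    proof (cases "\<epsilon>2 / 2 \<le> 25 * \<epsilon>1")
      case True
      then show False using no_tester[OF n2 e2 True ok] by simp
    next
      case False
      then have e1: "0 \<le> \<epsilon>1" "\<epsilon>1 \<le> 1/50" using e10 e21 by auto
      define D where "D = Dk I k T"
      define QA where "QA = Pi_pmf I 0 (\<lambda>_. A.qM)"
      define QB where "QB = Pi_pmf I 0 (\<lambda>_. B.qM)"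
      have cardI: "card I = n" by (simp add: I_def)
      have tv: "(\<Sum>j. \<bar>pmf A.qM j - pmf B.qM j\<bar>) \<le> 1 / (10 * real n)"
      proof -
        have "(\<Sum>j. \<bar>pmf A.qM j - pmf B.qM j\<bar>) = 2 * tv_nat (poi_mix M (real m)) (poi_mix M' (real m))"
          by (simp add: tv_nat_def A.pmf_qM B.pmf_qM)
        also have "\<dots> \<le> 2 * (1 / (20 * real n))" using tvh by simp
        finally show ?thesis by simp
      qed
      have cl: "closeP QA QB (1/10)"
      proof -
        have "closeP QA QB (real (card I) * (\<Sum>j. \<bar>pmf A.qM j - pmf B.qM j\<bar>))"
          unfolding QA_def QB_def by (rule closeP_Pi[OF A.finI closeP_nat sum_abs_pmf_nonneg])
        moreover have "real (card I) * (\<Sum>j. \<bar>pmf A.qM j - pmf B.qM j\<bar>) \<le> 1/10"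
          using tv n0 cardI by (simp add: field_simps)
        ultimately show ?thesis by (rule closeP_mono)
      qed
      have eqA: "ennreal (pmf (bind_pmf QA D) True) = (\<integral>\<^sup>+u. ennreal (pmf (bind_pmf (A.Pu u) D) True) \<partial>A.P)"
        unfolding QA_def ennreal_pmf_bind A.interchange ..
      have eqB: "ennreal (pmf (bind_pmf QB D) True) = (\<integral>\<^sup>+u. ennreal (pmf (bind_pmf (B.Pu u) D) True) \<partial>B.P)"
        unfolding QB_def ennreal_pmf_bind B.interchange ..
      have low: "ennreal (32/55) \<le> ennreal (pmf (bind_pmf QA D) True)"
        unfolding eqA unfolding D_def
        by (rule A.lower_world[OF I_def n0 m200 km meanM devM e1 tstT])
      have up: "ennreal (pmf (bind_pmf QB D) True) \<le> ennreal (27/125)"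
        unfolding eqB unfolding D_def
        using m200 by (intro B.upper_world[OF I_def n0 _ meanM' e2 devM' bae tstF]) auto
      have "ennreal (pmf (bind_pmf QA D) True) \<le> ennreal (pmf (bind_pmf QB D) True) + ennreal (1/10)"
      proof -
        have "(\<integral>\<^sup>+c. ennreal (pmf (D c) True) \<partial>measure_pmf QA) \<le> (\<integral>\<^sup>+c. ennreal (pmf (D c) True) \<partial>measure_pmf QB) + ennreal (1/10)"
          using cl unfolding closeP_def by (auto simp: pmf_le_1)
        then show ?thesis by (simp add: ennreal_pmf_bind)
      qed
      then have "ennreal (32/55) \<le> ennreal (27/125) + ennreal (1/10)"
        using low up by (meson add_right_mono order_trans)
      then have "ennreal (32/55) \<le> ennreal (27/125 + 1/10)" by (simp add: ennreal_plus[symmetric] del: ennreal_plus)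
      then have "(32/55::real) \<le> 27/125 + 1/10" by (subst (asm) ennreal_le_iff) auto
      then show False by simp
    qed
  qed
qed


end
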